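(* Let $Z=(U,\Omega,\mathcal I)$ be a $3$-matroid. The following are equivalent: (1) $Z$ is tight and binary; (2) $Z$ is tight and strictly binary; (3) $Z=\mathcal Z(Q)$ for some sheltering matroid $Q=(M,\Omega)$ such that there exist a finite set $V$, a symmetric $V\times V$ matrix $A$ over $GF(2)$, and a labelling $U=\{u_1(v),u_2(v),u_3(v): v\in V\}$ with $\Omega=\{\{u_1(v),u_2(v),u_3(v)\}: v\in V\}$, for which $M$ is the column matroid of the $GF(2)$-matrix $(I\mid A\mid A+I)$ (rows indexed by $V$) whose $v$-columns in the three blocks are labelled $u_1(v),u_2(v),u_3(v)$ respectively.
   Context: Let $\Omega$ be a partition of a finite set $U$. $T\subseteq U$ is a transversal (subtransversal) of $\Omega$ if $|T\cap\omega|=1$ ($\le 1$) for all $\omega\in\Omega$; $\mathcal S(\Omega)$ denotes the set of subtransversals. A skew pair of $\omega\in\Omega$ is a $2$-element subset of $\omega$. A multimatroid over $(U,\Omega)$ is a triple $Z=(U,\Omega,\mathcal I)$ with $\mathcal I\subseteq\mathcal S(\Omega)$ such that (i) for each transversal $T$, $\{I\in\mathcal I: I\subseteq T\}$ is the family of independent sets of a matroid on $T$, and (ii) for every $I\in\mathcal I$ and every skew pair $\{x,y\}$ of some $\omega\in\Omega$ with $\omega\cap I=\emptyset$, $I\cup\{x\}\in\mathcal I$ or $I\cup\{y\}\in\mathcal I$. $Z$ is a $q$-matroid if every $\omega\in\Omega$ has size $q$; it is nondegenerate if every $\omega$ has size $>1$. For $S\in\mathcal S(\Omega)$, its rank is the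 largest size of a member of $\mathcal I$ contained in $S$. $Z$ is tight if it is nondegenerate and for every $S\in\mathcal S(\Omega)$ with $|S|=|\Omega|-1$, letting $\omega$ be the class disjoint from $S$, there is $x\in\omega$ with rank$(S\cup\{x\})=$ rank$(S)$. A sheltering matroid is a pair $Q=(M,\Omega)$ where $M$ is a matroid on $U$ and $\Omega$ a partition of $U$ such that for every independent set $I\in\mathcal S(\Omega)$ of $M$ and every skew pair $\{x,y\}$ of a class $\omega$ with $\omega\cap I=\emptyset$, $I\cup\{x\}$ or $I\cup\{y\}$ is independent in $M$. Then $\mathcal Z(Q)=(U,\Omega,\{I\in\mathcal S(\Omega): I\text{ independent in }M\})$ is a multimatroid, said to be sheltered by $Q$. $Q$ is strict if $r(M)\le|\Omega|$. A multimatroid $Z$ is binary if $Z=\mathcal Z(Q)$ for some sheltering matroid $Q=(M,\Omega)$ with $M$ representable over $GF(2)$, and strictly binary if moreover $Q$ can be chosen strict. *)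

theory Defs
  imports Main "HOL-Library.Z2"
begin

definition is_partition :: "'a set \<Rightarrow> 'a set set \<Rightarrow> bool" where
  "is_partition U \<Omega> \<longleftrightarrow> (\<forall>\<omega>\<in>\<Omega>. \<omega> \<noteq> {}) \<and> \<Union>\<Omega> = U \<and>
     (\<forall>\<omega>\<in>\<Omega>. \<forall>\<omega>'\<in>\<Omega>. \<omega> \<noteq> \<omega>' \<longrightarrow> \<omega> \<inter> \<omega>' = {})"

definition subtransversals :: "'a set \<Rightarrow> 'a set set \<Rightarrow> 'a set set" where
  "subtransversals U \<Omega> = {T. T \<subseteq> U \<and> (\<forall>\<omega>\<in>\<Omega>. card (T \<inter> \<omega>) \<le> 1)}"

definition transversals :: "'a set \<Rightarrow> 'a set set \<Rightarrow> 'a set set" where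
  "transversals U \<Omega> = {T. T \<subseteq> U \<and> (\<forall>\<omega>\<in>\<Omega>. card (T \<inter> \<omega>) = 1)}"

definition matroid :: "'a set \<Rightarrow> 'a set set \<Rightarrow> bool" where
  "matroid E \<I> \<longleftrightarrow> finite E \<and> (\<forall>X\<in>\<I>. X \<subseteq> E) \<and> {} \<in> \<I> \<and>
     (\<forall>X Y. X \<in> \<I> \<and> Y \<subseteq> X \<longrightarrow> Y \<in> \<I>) \<and>
     (\<forall>X\<in>\<I>. \<forall>Y\<in>\<I>. card X < card Y \<longrightarrow> (\<exists>y\<in>Y - X. insert y X \<in> \<I>))"

definition matroid_rank :: "'a set set \<Rightarrow> nat" where
  "matroid_rank \<I> = Max (card ` \<I>)"

definition multimatroid :: "'a set \<Rightarrow> 'a set set \<Rightarrow> 'a set set \<Rightarrow> bool" where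
  "multimatroid U \<Omega> \<I> \<longleftrightarrow> finite U \<and> is_partition U \<Omega> \<and>
     \<I> \<subseteq> subtransversals U \<Omega> \<and>
     (\<forall>T\<in>transversals U \<Omega>. matroid T {I\<in>\<I>. I \<subseteq> T}) \<and>
     (\<forall>I\<in>\<I>. \<forall>\<omega>\<in>\<Omega>. \<forall>x\<in>\<omega>. \<forall>y\<in>\<omega>. x \<noteq> y \<and> \<omega> \<inter> I = {} \<longrightarrow>
         insert x I \<in> \<I> \<or> insert y I \<in> \<I>)"

definition q_matroid :: "nat \<Rightarrow> 'a set \<Rightarrow> 'a set set \<Rightarrow> 'a set set \<Rightarrow> bool" where
  "q_matroid q U \<Omega> \<I> \<longleftrightarrow> multimatroid U \<Omega> \<I> \<and> (\<forall>\<omega>\<in>\<Omega>. card \<omega> = q)"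

definition nondegenerate :: "'a set set \<Rightarrow> bool" where
  "nondegenerate \<Omega> \<longleftrightarrow> (\<forall>\<omega>\<in>\<Omega>. card \<omega> > 1)"

definition mm_rank :: "'a set set \<Rightarrow> 'a set \<Rightarrow> nat" where
  "mm_rank \<I> S = Max {card I | I. I \<in> \<I> \<and> I \<subseteq> S}"

definition tight :: "'a set \<Rightarrow> 'a set set \<Rightarrow> 'a set set \<Rightarrow> bool" where
  "tight U \<Omega> \<I> \<longleftrightarrow> nondegenerate \<Omega> \<and>
     (\<forall>S\<in>subtransversals U \<Omega>. card S = card \<Omega> - 1 \<longrightarrow>
        (\<forall>\<omega>\<in>\<Omega>. \<omega> \<inter> S = {} \<longrightarrow> (\<exists>x\<in>\<omega>. mm_rank \<I> (insert x S) = mm_rank \<I> S)))"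

definition sheltering :: "'a set \<Rightarrow> 'a set set \<Rightarrow> 'a set set \<Rightarrow> bool" where
  "sheltering U M \<Omega> \<longleftrightarrow> matroid U M \<and> is_partition U \<Omega> \<and>
     (\<forall>I\<in>M \<inter> subtransversals U \<Omega>. \<forall>\<omega>\<in>\<Omega>. \<forall>x\<in>\<omega>. \<forall>y\<in>\<omega>. x \<noteq> y \<and> \<omega> \<inter> I = {} \<longrightarrow>
         insert x I \<in> M \<or> insert y I \<in> M)"

definition sheltered_indep :: "'a set \<Rightarrow> 'a set set \<Rightarrow> 'a set set \<Rightarrow> 'a set set" where
  "sheltered_indep U M \<Omega> = {I \<in> subtransversals U \<Omega>. I \<in> M}"

definition strict_sheltering :: "'a set \<Rightarrow> 'a set set \<Rightarrow> 'a set set \<Rightarrow> bool" where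
  "strict_sheltering U M \<Omega> \<longleftrightarrow> sheltering U M \<Omega> \<and> matroid_rank M \<le> card \<Omega>"

definition gf2_indep :: "('a \<Rightarrow> 'r \<Rightarrow> bit) \<Rightarrow> 'a set \<Rightarrow> bool" where
  "gf2_indep col X \<longleftrightarrow> (\<forall>c :: 'a \<Rightarrow> bit. (\<forall>i. (\<Sum>x\<in>X. c x * col x i) = 0) \<longrightarrow> (\<forall>x\<in>X. c x = 0))"

definition column_matroid :: "'a set \<Rightarrow> ('a \<Rightarrow> 'r \<Rightarrow> bit) \<Rightarrow> 'a set set" where
  "column_matroid U col = {X. X \<subseteq> U \<and> gf2_indep col X}"

definition binary_matroid :: "'a set \<Rightarrow> 'a set set \<Rightarrow> bool" where
  "binary_matroid U M \<longleftrightarrow> (\<exists>(n::nat) (col :: 'a \<Rightarrow> nat \<Rightarrow> bit).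
      (\<forall>x i. n \<le> i \<longrightarrow> col x i = 0) \<and> M = column_matroid U col)"

definition binary_mm :: "'a set \<Rightarrow> 'a set set \<Rightarrow> 'a set set \<Rightarrow> bool" where
  "binary_mm U \<Omega> \<I> \<longleftrightarrow> (\<exists>M. sheltering U M \<Omega> \<and> binary_matroid U M \<and>
      \<I> = sheltered_indep U M \<Omega>)"

definition strictly_binary_mm :: "'a set \<Rightarrow> 'a set set \<Rightarrow> 'a set set \<Rightarrow> bool" where
  "strictly_binary_mm U \<Omega> \<I> \<longleftrightarrow> (\<exists>M. strict_sheltering U M \<Omega> \<and> binary_matroid U M \<and>
      \<I> = sheltered_indep U M \<Omega>)"

text \<open>Columns of the matrix (I | A | A + I) with rows indexed by V: the v-column of block k
  (k = 1,2,3) is labelled u k v.\<close>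

definition IAAI_col :: "('v \<Rightarrow> 'v \<Rightarrow> bit) \<Rightarrow> nat \<Rightarrow> 'v \<Rightarrow> 'v \<Rightarrow> bit" where
  "IAAI_col A k v = (\<lambda>w. if k = 1 then (if w = v then 1 else 0)
                         else if k = 2 then A w v
                         else A w v + (if w = v then 1 else 0))"

definition IAAI_sheltered :: "'a set \<Rightarrow> 'a set set \<Rightarrow> 'a set set \<Rightarrow> bool" where
  "IAAI_sheltered U \<Omega> \<I> \<longleftrightarrow> (\<exists>M. sheltering U M \<Omega> \<and> \<I> = sheltered_indep U M \<Omega> \<and>
     (\<exists>(V :: nat set) (A :: nat \<Rightarrow> nat \<Rightarrow> bit) (u :: nat \<Rightarrow> nat \<Rightarrow> 'a) (col :: 'a \<Rightarrow> nat \<Rightarrow> bit).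
        finite V \<and> (\<forall>v\<in>V. \<forall>w\<in>V. A v w = A w v) \<and>
        inj_on (\<lambda>(k, v). u k v) ({1,2,3} \<times> V) \<and>
        U = (\<lambda>(k, v). u k v) ` ({1,2,3} \<times> V) \<and>
        \<Omega> = {{u 1 v, u 2 v, u 3 v} | v. v \<in> V} \<and>
        (\<forall>k\<in>{1,2,3}. \<forall>v\<in>V. \<forall>w\<in>V. col (u k v) w = IAAI_col A k v w) \<and>
        (\<forall>x\<in>U. \<forall>w. w \<notin> V \<longrightarrow> col x w = 0) \<and>
        M = column_matroid U col))"

end

theory Submission
  imports Defs
begin

declare add_bit_eq_xor[simp del] mult_bit_eq_and[simp del]


lemma bit_cases2: "(b::bit) = 0 \<or> b = 1" by (cases b) auto
lemma bit_add_self[simp]: "(x::bit) + x = 0" by (cases x) simp_all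
lemma bit_add_eq0: "(x::bit) + y = 0 \<longleftrightarrow> x = y"
  by (cases x; cases y) simp_all

lemma sum_ind:
  assumes "finite V" "i \<in> V"
  shows "(\<Sum>j\<in>V. (if j = i then 1 else 0) * (f j::bit)) = f i"
proof -
  have e: "\<And>j. (if j = i then 1 else 0) * f j = (if j = i then f i else 0)" by simp
  show ?thesis unfolding e using assms by (simp add: sum.delta)
qed

lemma sum_ind':
  assumes "finite V" "i \<in> V"
  shows "(\<Sum>j\<in>V. (f j::bit) * (if j = i then 1 else 0)) = f i"
  using sum_ind[OF assms, of f] by (simp add: mult.commute)

definition lcomb :: "('a \<Rightarrow> 'r \<Rightarrow> bit) \<Rightarrow> 'a set \<Rightarrow> ('a \<Rightarrow> bit) \<Rightarrow> 'r \<Rightarrow> bit" where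
  "lcomb col X c = (\<lambda>i. \<Sum>x\<in>X. c x * col x i)"

definition lspan :: "('a \<Rightarrow> 'r \<Rightarrow> bit) \<Rightarrow> 'a set \<Rightarrow> ('r \<Rightarrow> bit) set" where
  "lspan col X = {f. \<exists>c. f = lcomb col X c}"

lemma gf2_indep_alt:
  "gf2_indep col X \<longleftrightarrow> (\<forall>c. lcomb col X c = (\<lambda>_. 0) \<longrightarrow> (\<forall>x\<in>X. c x = 0))"
  unfolding gf2_indep_def lcomb_def by (simp add: fun_eq_iff)

lemma lcomb_insert:
  "finite X \<Longrightarrow> x \<notin> X \<Longrightarrow> lcomb col (insert x X) c = (\<lambda>i. c x * col x i + lcomb col X c i)"
  unfolding lcomb_def by (simp add: sum.insert)

lemma lcomb_cong: "(\<And>x. x \<in> X \<Longrightarrow> c x = d x) \<Longrightarrow> lcomb col X c = lcomb col X d"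
  unfolding lcomb_def by (auto intro!: sum.cong)

lemma lcomb_empty[simp]: "lcomb col {} c = (\<lambda>_. 0)"
  unfolding lcomb_def by simp

lemma lspan_empty: "lspan col {} = {\<lambda>_. 0}"
  unfolding lspan_def by simp

lemma lcomb_subset:
  assumes "finite X" "Y \<subseteq> X"
  shows "lcomb col Y c = lcomb col X (\<lambda>x. if x \<in> Y then c x else 0)"
  unfolding lcomb_def
proof
  fix i
  show "(\<Sum>x\<in>Y. c x * col x i) = (\<Sum>x\<in>X. (if x \<in> Y then c x else 0) * col x i)"
    using assms by (intro sum.mono_neutral_cong_left) auto
qed

lemma gf2_indep_subset:
  assumes "gf2_indep col X" "Y \<subseteq> X" "finite X"
  shows "gf2_indep col Y"
  unfolding gf2_indep_alt
proof (intro allI impI ballI)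
  fix c x assume h: "lcomb col Y c = (\<lambda>_. 0)" and x: "x \<in> Y"
  have "lcomb col X (\<lambda>x. if x \<in> Y then c x else 0) = (\<lambda>_. 0)"
    using h lcomb_subset[OF assms(3,2)] by metis
  then have "\<forall>z\<in>X. (if z \<in> Y then c z else 0) = 0" using assms(1) unfolding gf2_indep_alt by blast
  then show "c x = 0" using x assms(2) by force
qed

lemma gf2_indep_empty[simp]: "gf2_indep col {}"
  unfolding gf2_indep_def by simp

lemma in_lspan_self: "finite X \<Longrightarrow> x \<in> X \<Longrightarrow> col x \<in> lspan col X"
proof -
  assume "finite X" "x \<in> X"
  have e: "\<And>z i. (if z = x then 1 else 0) * col z i = (if z = x then col x i else 0)" by simp
  have "col x = lcomb col X (\<lambda>z. if z = x then 1 else 0)"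
    unfolding lcomb_def e using \<open>finite X\<close> \<open>x \<in> X\<close> by (simp add: sum.delta)
  then show ?thesis unfolding lspan_def by blast
qed

lemma lcomb_upd: "x \<notin> X \<Longrightarrow> lcomb col X (c(x:=a)) = lcomb col X c"
  by (rule lcomb_cong) auto

lemma lspan_add: "f \<in> lspan col X \<Longrightarrow> g \<in> lspan col X \<Longrightarrow> (\<lambda>i. f i + g i) \<in> lspan col X"
  unfolding lspan_def lcomb_def
proof clarify
  fix c d
  have "(\<lambda>i. (\<Sum>x\<in>X. c x * col x i) + (\<Sum>x\<in>X. d x * col x i)) = (\<lambda>i. \<Sum>x\<in>X. (c x + d x) * col x i)"
    by (simp add: sum.distrib distrib_right)
  then show "\<exists>e. (\<lambda>i. (\<Sum>x\<in>X. c x * col x i) + (\<Sum>x\<in>X. d x * col x i)) = (\<lambda>i. \<Sum>x\<in>X. e x * col x i)"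
    by (intro exI[of _ "\<lambda>x. c x + d x"])
qed

lemma lspan_zero: "(\<lambda>_. 0) \<in> lspan col X"
  unfolding lspan_def lcomb_def by (rule CollectI, rule exI[of _ "\<lambda>_. 0"]) simp

lemma lspan_mono: "finite X \<Longrightarrow> Y \<subseteq> X \<Longrightarrow> lspan col Y \<subseteq> lspan col X"
  unfolding lspan_def using lcomb_subset by blast

lemma lspan_insert:
  assumes "finite X" "x \<notin> X"
  shows "f \<in> lspan col (insert x X) \<longleftrightarrow> f \<in> lspan col X \<or> (\<lambda>i. f i + col x i) \<in> lspan col X"
proof
  assume "f \<in> lspan col (insert x X)"
  then obtain c where c: "f = lcomb col (insert x X) c" unfolding lspan_def by blast
  have f: "f = (\<lambda>i. c x * col x i + lcomb col X c i)" using c lcomb_insert[OF assms] by simp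
  show "f \<in> lspan col X \<or> (\<lambda>i. f i + col x i) \<in> lspan col X"
  proof (cases "c x = 0")
    case True
    then show ?thesis using f unfolding lspan_def by auto
  next
    case False
    then have "c x = 1" using bit_cases2 by blast
    then have "(\<lambda>i. f i + col x i) = lcomb col X c" using f by (simp add: fun_eq_iff add.assoc[symmetric] add.commute)
    then show ?thesis unfolding lspan_def by blast
  qed
next
  assume "f \<in> lspan col X \<or> (\<lambda>i. f i + col x i) \<in> lspan col X"
  then show "f \<in> lspan col (insert x X)"
  proof
    assume "f \<in> lspan col X"
    then show ?thesis using lspan_mono[of "insert x X" X col] assms by blast
  next
    assume "(\<lambda>i. f i + col x i) \<in> lspan col X"
    then obtain c where c: "(\<lambda>i. f i + col x i) = lcomb col X c" unfolding lspan_def by blast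
    have "lcomb col (insert x X) (c(x:=1)) = (\<lambda>i. col x i + lcomb col X c i)"
      using lcomb_insert[OF assms, of col "c(x:=1)"] lcomb_upd[OF assms(2), of col c 1] by simp
    also have "\<dots> = f" using c by (simp add: fun_eq_iff) (metis add.commute add.left_cancel bit_add_self add_0_right add.assoc)
    finally show ?thesis unfolding lspan_def by blast
  qed
qed

lemma indep_insert:
  assumes "finite X" "x \<notin> X" "gf2_indep col X"
  shows "gf2_indep col (insert x X) \<longleftrightarrow> col x \<notin> lspan col X"
proof
  assume ind: "gf2_indep col (insert x X)"
  show "col x \<notin> lspan col X"
  proof
    assume "col x \<in> lspan col X"
    then obtain c where c: "col x = lcomb col X c" unfolding lspan_def by blast
    have "lcomb col (insert x X) (c(x:=1)) = (\<lambda>i. col x i + lcomb col X c i)"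
      using lcomb_insert[OF assms(1,2), of col "c(x:=1)"] lcomb_upd[OF assms(2), of col c 1] by simp
    also have "\<dots> = (\<lambda>_. 0)" using c by simp
    finally have "(c(x:=1)) x = 0" using ind unfolding gf2_indep_alt by blast
    then show False by simp
  qed
next
  assume nsp: "col x \<notin> lspan col X"
  show "gf2_indep col (insert x X)" unfolding gf2_indep_alt
  proof (intro allI impI)
    fix c assume h: "lcomb col (insert x X) c = (\<lambda>_. 0)"
    then have h2: "\<And>i. c x * col x i + lcomb col X c i = 0" using lcomb_insert[OF assms(1,2)] by metis
    have cx: "c x = 0"
    proof (rule ccontr)
      assume "c x \<noteq> 0" then have "c x = 1" using bit_cases2 by blast
      then have "col x = lcomb col X c" using h2 by (simp add: fun_eq_iff bit_add_eq0)
      then show False using nsp unfolding lspan_def by blast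
    qed
    then have "lcomb col X c = (\<lambda>_. 0)" using h2 by (simp add: fun_eq_iff)
    then have "\<forall>z\<in>X. c z = 0" using assms(3) unfolding gf2_indep_alt by blast
    then show "\<forall>z\<in>insert x X. c z = 0" using cx by simp
  qed
qed


lemma indep_card_le_rows:
  fixes col :: "'a \<Rightarrow> 'r \<Rightarrow> bit"
  assumes "finite V"
  shows "finite X \<Longrightarrow> gf2_indep col X \<Longrightarrow> (\<forall>x\<in>X. \<forall>i. i \<notin> V \<longrightarrow> col x i = 0) \<Longrightarrow> card X \<le> card V"
  using assms
proof (induction V arbitrary: col X rule: finite_induct)
  case empty
  have "X = {}"
  proof (rule ccontr)
    assume "X \<noteq> {}" then obtain x where x: "x \<in> X" by blast
    have "lcomb col X (\<lambda>_. 1) = (\<lambda>_. 0)" using empty.prems(3) unfolding lcomb_def by (simp add: fun_eq_iff)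
    then have "(1::bit) = 0" using empty.prems(2) x unfolding gf2_indep_alt by blast
    then show False by simp
  qed
  then show ?case by simp
next
  case (insert i V)
  show ?case
  proof (cases "\<forall>x\<in>X. col x i = 0")
    case True
    then have "\<forall>x\<in>X. \<forall>j. j \<notin> V \<longrightarrow> col x j = 0" using insert.prems(3) by (metis insert_iff)
    then have "card X \<le> card V" using insert.IH insert.prems by blast
    then show ?thesis using insert.hyps by simp
  next
    case False
    then obtain x0 where x0: "x0 \<in> X" "col x0 i \<noteq> 0" by blast
    then have x0i: "col x0 i = 1" using bit_cases2 by blast
    define col2 where "col2 = (\<lambda>x j. col x j + col x i * col x0 j)"
    define X' where "X' = X - {x0}"
    have fX': "finite X'" using insert.prems(1) X'_def by simp
    have XX: "X = insert x0 X'" "x0 \<notin> X'" using x0 X'_def by auto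
    have supp: "\<forall>x\<in>X'. \<forall>j. j \<notin> V \<longrightarrow> col2 x j = 0"
    proof (intro ballI allI impI)
      fix x j assume x: "x \<in> X'" and j: "j \<notin> V"
      show "col2 x j = 0"
      proof (cases "j = i")
        case True then show ?thesis using x0i by (simp add: col2_def)
      next
        case False
        then have "col x j = 0" "col x0 j = 0" using insert.prems(3) x x0(1) j XX by auto
        then show ?thesis by (simp add: col2_def)
      qed
    qed
    have ind: "gf2_indep col2 X'"
      unfolding gf2_indep_alt
    proof (intro allI impI)
      fix c assume h: "lcomb col2 X' c = (\<lambda>_. 0)"
      define s where "s = (\<Sum>x\<in>X'. c x * col x i)"
      have e1: "\<And>j. lcomb col2 X' c j = lcomb col X' c j + s * col x0 j"
        unfolding lcomb_def col2_def s_def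
        by (simp add: distrib_left sum.distrib sum_distrib_right mult.assoc)
      have "lcomb col X (c(x0:=s)) = (\<lambda>j. s * col x0 j + lcomb col X' c j)"
        using lcomb_insert[OF fX' XX(2), of col "c(x0:=s)"] lcomb_upd[OF XX(2), of col c s] XX(1) by simp
      also have "\<dots> = (\<lambda>_. 0)" using h e1 by (simp add: fun_eq_iff add.commute)
      finally have "\<forall>x\<in>X. (c(x0:=s)) x = 0" using insert.prems(2) unfolding gf2_indep_alt by blast
      then show "\<forall>x\<in>X'. c x = 0" using XX by (metis fun_upd_other insertCI)
    qed
    have "card X' \<le> card V" using insert.IH[OF fX' ind supp] .
    then show ?thesis using XX fX' insert.hyps by simp
  qed
qed

lemma steinitz:
  fixes col :: "'a \<Rightarrow> 'r \<Rightarrow> bit"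
  assumes "finite X" "finite Y" "gf2_indep col Y" "\<forall>y\<in>Y. col y \<in> lspan col X"
  shows "card Y \<le> card X"
proof -
  have "\<forall>y\<in>Y. \<exists>c. col y = lcomb col X c" using assms(4) unfolding lspan_def by blast
  then obtain cf where cf: "\<forall>y\<in>Y. col y = lcomb col X (cf y)" by metis
  define colr where "colr = (\<lambda>y x. if x \<in> X then cf y x else (0::bit))"
  have ind: "gf2_indep colr Y"
    unfolding gf2_indep_alt
  proof (intro allI impI)
    fix d assume h: "lcomb colr Y d = (\<lambda>_. 0)"
    have "lcomb col Y d = (\<lambda>_. 0)"
    proof
      fix i
      have "lcomb col Y d i = (\<Sum>y\<in>Y. d y * (\<Sum>x\<in>X. cf y x * col x i))"
        unfolding lcomb_def using cf by (auto intro!: sum.cong simp: lcomb_def)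
      also have "\<dots> = (\<Sum>x\<in>X. (\<Sum>y\<in>Y. d y * cf y x) * col x i)"
        by (simp add: sum_distrib_left sum_distrib_right mult.assoc) (rule sum.swap)
      also have "\<dots> = (\<Sum>x\<in>X. lcomb colr Y d x * col x i)"
        unfolding lcomb_def colr_def by (auto intro!: sum.cong)
      also have "\<dots> = 0" using h by simp
      finally show "lcomb col Y d i = 0" .
    qed
    then show "\<forall>y\<in>Y. d y = 0" using assms(3) unfolding gf2_indep_alt by blast
  qed
  show ?thesis
    by (rule indep_card_le_rows[OF assms(1) assms(2) ind]) (simp add: colr_def)
qed

lemma lspan_trans:
  assumes "finite X" "finite Y" "\<forall>y\<in>Y. col y \<in> lspan col X"
  shows "lspan col Y \<subseteq> lspan col X"
proof
  fix f assume "f \<in> lspan col Y"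
  then obtain d where d: "f = lcomb col Y d" unfolding lspan_def by blast
  have "\<forall>y\<in>Y. \<exists>c. col y = lcomb col X c" using assms(3) unfolding lspan_def by blast
  then obtain cf where cf: "\<forall>y\<in>Y. col y = lcomb col X (cf y)" by metis
  have "f = lcomb col X (\<lambda>x. \<Sum>y\<in>Y. d y * cf y x)"
  proof
    fix i
    have "f i = (\<Sum>y\<in>Y. d y * (\<Sum>x\<in>X. cf y x * col x i))"
      unfolding d lcomb_def using cf by (auto intro!: sum.cong simp: lcomb_def)
    also have "\<dots> = (\<Sum>x\<in>X. (\<Sum>y\<in>Y. d y * cf y x) * col x i)"
      by (simp add: sum_distrib_left sum_distrib_right mult.assoc) (rule sum.swap)
    finally show "f i = lcomb col X (\<lambda>x. \<Sum>y\<in>Y. d y * cf y x) i" unfolding lcomb_def .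
  qed
  then show "f \<in> lspan col X" unfolding lspan_def by blast
qed

lemma column_matroid_matroid:
  assumes "finite U"
  shows "matroid U (column_matroid U col)"
  unfolding matroid_def column_matroid_def
proof (intro conjI allI impI ballI)
  show "finite U" by fact
  show "{} \<in> {X. X \<subseteq> U \<and> gf2_indep col X}" by simp
next
  fix X Y assume "X \<in> {X. X \<subseteq> U \<and> gf2_indep col X} \<and> Y \<subseteq> X"
  then show "Y \<in> {X. X \<subseteq> U \<and> gf2_indep col X}"
    using gf2_indep_subset assms finite_subset by blast
next
  fix X Y assume X: "X \<in> {X. X \<subseteq> U \<and> gf2_indep col X}" and Y: "Y \<in> {X. X \<subseteq> U \<and> gf2_indep col X}"
    and c: "card X < card Y"
  have fX: "finite X" "finite Y" using X Y assms finite_subset by auto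
  show "\<exists>y\<in>Y - X. insert y X \<in> {X. X \<subseteq> U \<and> gf2_indep col X}"
  proof (rule ccontr)
    assume "\<not> ?thesis"
    then have "\<forall>y\<in>Y - X. \<not> gf2_indep col (insert y X)" using X Y by auto
    then have "\<forall>y\<in>Y - X. col y \<in> lspan col X" using indep_insert[OF fX(1)] X by auto
    then have "\<forall>y\<in>Y. col y \<in> lspan col X" using in_lspan_self[OF fX(1)] by blast
    then have "card Y \<le> card X" using steinitz[OF fX(1) fX(2)] Y by blast
    then show False using c by simp
  qed
next
  fix X assume "X \<in> {X. X \<subseteq> U \<and> gf2_indep col X}" then show "X \<subseteq> U" by simp
qed

definition dt :: "'r set \<Rightarrow> ('r \<Rightarrow> bit) \<Rightarrow> ('r \<Rightarrow> bit) \<Rightarrow> bit" where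
  "dt V y f = (\<Sum>i\<in>V. y i * f i)"

lemma dt_add_left: "dt V (\<lambda>i. y1 i + y2 i) f = dt V y1 f + dt V y2 f"
  unfolding dt_def by (simp add: distrib_right sum.distrib)

lemma dt_add_right: "dt V y (\<lambda>i. f i + g i) = dt V y f + dt V y g"
  unfolding dt_def by (simp add: distrib_left sum.distrib)

lemma dual_sep:
  fixes col :: "'a \<Rightarrow> 'r \<Rightarrow> bit"
  assumes "finite V" "finite X"
  shows "(\<forall>x\<in>X. \<forall>i. i \<notin> V \<longrightarrow> col x i = 0) \<Longrightarrow> (\<forall>i. i \<notin> V \<longrightarrow> z i = 0) \<Longrightarrow> z \<notin> lspan col X \<Longrightarrow>
     \<exists>y. (\<forall>x\<in>X. dt V y (col x) = 0) \<and> dt V y z = 1"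
  using assms(2)
proof (induction X arbitrary: z rule: finite_induct)
  case empty
  then have "z \<noteq> (\<lambda>_. 0)" using lspan_empty by blast
  then obtain i where i: "z i \<noteq> 0" by (meson ext)
  then have iV: "i \<in> V" using empty.prems(2) by blast
  have "dt V (\<lambda>j. if j = i then 1 else 0) z = z i"
    unfolding dt_def using sum_ind[OF assms(1) iV] .
  then show ?case using i bit_cases2 by (metis empty_iff)
next
  case (insert x X)
  have n1: "z \<notin> lspan col X" using insert.prems(3) lspan_insert[OF insert.hyps] by blast
  have n2: "(\<lambda>i. z i + col x i) \<notin> lspan col X" using insert.prems(3) lspan_insert[OF insert.hyps] by blast
  have s1: "\<forall>x\<in>X. \<forall>i. i \<notin> V \<longrightarrow> col x i = 0" using insert.prems(1) by blast
  obtain y1 where y1: "\<forall>x\<in>X. dt V y1 (col x) = 0" "dt V y1 z = 1"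
    using insert.IH[OF s1 insert.prems(2) n1] by blast
  have s2: "\<forall>i. i \<notin> V \<longrightarrow> z i + col x i = 0" using insert.prems(1,2) by simp
  obtain y2 where y2: "\<forall>x\<in>X. dt V y2 (col x) = 0" "dt V y2 (\<lambda>i. z i + col x i) = 1"
    using insert.IH[OF s1 s2 n2] by blast
  have y2': "dt V y2 z + dt V y2 (col x) = 1" using y2(2) dt_add_right[of V y2 z "col x"] by simp
  show ?case
  proof (cases "dt V y1 (col x) = 0")
    case True then show ?thesis using y1 by auto
  next
    case F1: False
    then have a1: "dt V y1 (col x) = 1" using bit_cases2 by blast
    show ?thesis
    proof (cases "dt V y2 (col x) = 0")
      case True
      then show ?thesis using y2 y2' by auto
    next
      case False
      then have a2: "dt V y2 (col x) = 1" using bit_cases2 by blast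
      then have a3: "dt V y2 z = 0" using y2' by (metis add_cancel_left_left add_right_cancel bit_add_self)
      have "\<forall>x'\<in>insert x X. dt V (\<lambda>i. y1 i + y2 i) (col x') = 0"
        using y1 y2 a1 a2 by (auto simp: dt_add_left)
      moreover have "dt V (\<lambda>i. y1 i + y2 i) z = 1" using y1 a3 by (simp add: dt_add_left)
      ultimately show ?thesis by blast
    qed
  qed
qed


definition lam :: "nat \<Rightarrow> bit" where "lam k = (if k = 2 then 0 else 1)"
definition mu :: "nat \<Rightarrow> bit" where "mu k = (if k = 1 then 0 else 1)"

definition mcol :: "(nat \<Rightarrow> nat \<Rightarrow> bit) \<Rightarrow> nat set \<Rightarrow> nat \<Rightarrow> nat \<Rightarrow> nat \<Rightarrow> bit" where
  "mcol A V k v = (\<lambda>w. if w \<in> V then IAAI_col A k v w else 0)"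

lemma IAAI_col_lm: "IAAI_col A k v w = lam k * (if w = v then 1 else 0) + mu k * A w v"
  unfolding IAAI_col_def lam_def mu_def by (auto simp: add.commute)

lemma lam_mu_nz: "lam k = 1 \<or> mu k = 1"
  unfolding lam_def mu_def by auto

lemma lam_mu_bits:
  assumes "lam k * p1 + mu k * q1 = 0" "lam k * p2 + mu k * q2 = 0"
  shows "p1 * q2 + p2 * (q1::bit) = 0"
  using assms unfolding lam_def mu_def
  using bit_cases2[of p1] bit_cases2[of p2] bit_cases2[of q1] bit_cases2[of q2]
  by (cases "k = 1"; cases "k = 2") auto

definition Ay :: "(nat \<Rightarrow> nat \<Rightarrow> bit) \<Rightarrow> nat set \<Rightarrow> (nat \<Rightarrow> bit) \<Rightarrow> nat \<Rightarrow> bit" where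
  "Ay A V y i = (\<Sum>w\<in>V. A i w * y w)"

definition symm :: "(nat \<Rightarrow> nat \<Rightarrow> bit) \<Rightarrow> nat set \<Rightarrow> bool" where
  "symm A V \<longleftrightarrow> (\<forall>v\<in>V. \<forall>w\<in>V. A v w = A w v)"

lemma Phi_zero:
  assumes "finite V" "symm A V"
  shows "(\<Sum>i\<in>V. x i * Ay A V y i + y i * Ay A V x i) = 0"
proof -
  have "(\<Sum>i\<in>V. y i * Ay A V x i) = (\<Sum>i\<in>V. \<Sum>w\<in>V. y i * A i w * x w)"
    unfolding Ay_def by (simp add: sum_distrib_left mult.assoc)
  also have "\<dots> = (\<Sum>w\<in>V. \<Sum>i\<in>V. y i * A i w * x w)" by (rule sum.swap)
  also have "\<dots> = (\<Sum>w\<in>V. \<Sum>i\<in>V. x w * (A w i * y i))"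
    using assms(2) unfolding symm_def by (intro sum.cong refl) (simp add: mult.commute mult.left_commute)
  also have "\<dots> = (\<Sum>i\<in>V. x i * Ay A V y i)"
    unfolding Ay_def by (simp add: sum_distrib_left)
  finally have "(\<Sum>i\<in>V. y i * Ay A V x i) = (\<Sum>i\<in>V. x i * Ay A V y i)" .
  then show ?thesis by (simp add: sum.distrib)
qed

lemma dt_mcol:
  assumes "finite V" "symm A V" "w \<in> V"
  shows "dt V y (mcol A V k w) = lam k * y w + mu k * Ay A V y w"
proof -
  have "dt V y (mcol A V k w) = (\<Sum>i\<in>V. y i * (lam k * (if i = w then 1 else 0) + mu k * A i w))"
    unfolding dt_def mcol_def IAAI_col_lm by (intro sum.cong) auto
  also have "\<dots> = (\<Sum>i\<in>V. lam k * (y i * (if i = w then 1 else 0))) + (\<Sum>i\<in>V. mu k * (A w i * y i))"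
    using assms(2,3) unfolding symm_def
    by (simp add: distrib_left sum.distrib, intro arg_cong2[where f="(+)"] sum.cong refl) (auto simp: ac_simps)
  also have "\<dots> = lam k * y w + mu k * Ay A V y w"
    unfolding Ay_def by (simp add: sum_distrib_left[symmetric] sum_ind'[OF assms(1,3)])
  finally show ?thesis .
qed

lemma mcol_supp: "i \<notin> V \<Longrightarrow> mcol A V k v i = 0"
  unfolding mcol_def by simp

lemma mcol3: "mcol A V 3 v = (\<lambda>i. mcol A V 1 v i + mcol A V 2 v i)"
  unfolding mcol_def IAAI_col_def by (auto simp: fun_eq_iff add.commute)

lemma lspan_cong: "(\<And>x. x \<in> X \<Longrightarrow> col x = col' x) \<Longrightarrow> lspan col X = lspan col' X"
  unfolding lspan_def lcomb_def by (auto intro!: sum.cong)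

lemma Phi_split:
  assumes "finite V" "v \<in> V" "\<And>i. i \<in> V - {v} \<Longrightarrow> F i = 0" "F v = (1::bit)"
  shows "(\<Sum>i\<in>V. F i) = 1"
proof -
  have "(\<Sum>i\<in>V. F i) = F v + (\<Sum>i\<in>V - {v}. F i)" using assms(1,2) by (simp add: sum.remove)
  also have "(\<Sum>i\<in>V - {v}. F i) = 0" using assms(3) by simp
  finally show ?thesis using assms(4) by simp
qed

lemma tcore:
  fixes tp :: "nat \<Rightarrow> nat"
  assumes fin: "finite V" and sy: "symm A V" and v: "v \<in> V"
  defines "g \<equiv> (\<lambda>w. mcol A V (tp w) w)"
  shows "\<exists>k\<in>{1,2,3}. mcol A V k v \<in> lspan g (V - {v})"
proof (rule ccontr)
  assume "\<not> ?thesis"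
  then have n1: "mcol A V 1 v \<notin> lspan g (V - {v})" and n2: "mcol A V 2 v \<notin> lspan g (V - {v})"
    and n3: "(\<lambda>i. mcol A V 1 v i + mcol A V 2 v i) \<notin> lspan g (V - {v})" using mcol3[of A V v] by auto
  let ?P = "V - {v}"
  have fP: "finite ?P" "v \<notin> ?P" using fin by auto
  define g1 where "g1 = g(v := mcol A V 2 v)"
  define g2 where "g2 = g(v := mcol A V 1 v)"
  have L1: "lspan g1 ?P = lspan g ?P" "lspan g2 ?P = lspan g ?P"
    by (rule lspan_cong, simp add: g1_def, rule lspan_cong, simp add: g2_def)
  have e1: "mcol A V 1 v \<notin> lspan g1 (insert v ?P)"
    using lspan_insert[OF fP, of "mcol A V 1 v" g1] L1 n1 n3 by (simp add: g1_def)
  have n3': "(\<lambda>i. mcol A V 2 v i + mcol A V 1 v i) \<notin> lspan g (V - {v})"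
    using n3 by (simp add: add.commute)
  have e2: "mcol A V 2 v \<notin> lspan g2 (insert v ?P)"
    using lspan_insert[OF fP, of "mcol A V 2 v" g2] L1 n2 n3' by (simp add: g2_def)
  have s1: "\<forall>x\<in>insert v ?P. \<forall>i. i \<notin> V \<longrightarrow> g1 x i = 0" by (simp add: g1_def g_def mcol_supp)
  have s2: "\<forall>x\<in>insert v ?P. \<forall>i. i \<notin> V \<longrightarrow> g2 x i = 0" by (simp add: g2_def g_def mcol_supp)
  obtain y1 where y1: "\<forall>x\<in>insert v ?P. dt V y1 (g1 x) = 0" "dt V y1 (mcol A V 1 v) = 1"
    using dual_sep[OF fin _ s1 _ e1] fP by (auto simp: mcol_supp)
  obtain y2 where y2: "\<forall>x\<in>insert v ?P. dt V y2 (g2 x) = 0" "dt V y2 (mcol A V 2 v) = 1"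
    using dual_sep[OF fin _ s2 _ e2] fP by (auto simp: mcol_supp)
  have d1: "y1 v = 1" "Ay A V y1 v = 0" "y2 v = 0" "Ay A V y2 v = 1"
    using y1 y2 dt_mcol[OF fin sy v, of y1] dt_mcol[OF fin sy v, of y2]
    by (auto simp: g1_def g2_def lam_def mu_def)
  have "(\<Sum>i\<in>V. y1 i * Ay A V y2 i + y2 i * Ay A V y1 i) = 1"
  proof (rule Phi_split[OF fin v])
    fix i assume i: "i \<in> V - {v}"
    have "dt V y1 (g i) = 0" "dt V y2 (g i) = 0" using y1 y2 i by (auto simp: g1_def g2_def)
    then have "lam (tp i) * y1 i + mu (tp i) * Ay A V y1 i = 0" "lam (tp i) * y2 i + mu (tp i) * Ay A V y2 i = 0"
      using dt_mcol[OF fin sy, of i] i by (auto simp: g_def)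
    then show "y1 i * Ay A V y2 i + y2 i * Ay A V y1 i = 0" by (rule lam_mu_bits)
  next
    show "y1 v * Ay A V y2 v + y2 v * Ay A V y1 v = 1" using d1 by simp
  qed
  then show False using Phi_zero[OF fin sy, of y1 y2] by simp
qed


lemma bit_solve: "(a::bit) = b + c \<Longrightarrow> c = a + b"
  using bit_cases2[of a] bit_cases2[of b] bit_cases2[of c] by auto

lemma Ay_add: "Ay A V (\<lambda>w. f w + g w) i = Ay A V f i + Ay A V g i"
  unfolding Ay_def by (simp add: distrib_left sum.distrib)

lemma Ay_delta: "finite V \<Longrightarrow> v \<in> V \<Longrightarrow> Ay A V (\<lambda>w. if w = v then 1 else 0) i = A i v"
  unfolding Ay_def by (rule sum_ind'[of V v "\<lambda>w. A i w"])

lemma lcomb_mcol: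
  fixes tp :: "nat \<Rightarrow> nat"
  assumes "finite V" "P \<subseteq> V" "i \<in> V"
  shows "lcomb (\<lambda>w. mcol A V (tp w) w) P c i =
     (if i \<in> P then lam (tp i) * c i else 0) + Ay A V (\<lambda>w. if w \<in> P then mu (tp w) * c w else 0) i"
proof -
  have fP: "finite P" using assms finite_subset by blast
  have "lcomb (\<lambda>w. mcol A V (tp w) w) P c i =
     (\<Sum>w\<in>P. (if w = i then lam (tp i) * c i else 0)) + (\<Sum>w\<in>P. A i w * (mu (tp w) * c w))"
    unfolding lcomb_def mcol_def IAAI_col_lm using assms(3)
    by (simp add: distrib_left sum.distrib, intro arg_cong2[where f="(+)"] sum.cong refl) (auto simp: ac_simps)
  also have "(\<Sum>w\<in>P. (if w = i then lam (tp i) * c i else 0)) = (if i \<in> P then lam (tp i) * c i else 0)"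
    using fP by (simp add: sum.delta)
  also have "(\<Sum>w\<in>P. A i w * (mu (tp w) * c w)) = Ay A V (\<lambda>w. if w \<in> P then mu (tp w) * c w else 0) i"
  proof -
    have "Ay A V (\<lambda>w. if w \<in> P then mu (tp w) * c w else 0) i = (\<Sum>w\<in>V. if w \<in> P then A i w * (mu (tp w) * c w) else 0)"
      unfolding Ay_def by (intro sum.cong) auto
    also have "\<dots> = (\<Sum>w\<in>V \<inter> P. A i w * (mu (tp w) * c w))" using assms(1) by (rule sum.inter_restrict[symmetric])
    also have "V \<inter> P = P" using assms(2) by blast
    finally show ?thesis by simp
  qed
  finally show ?thesis .
qed

lemma shcore:
  fixes tp :: "nat \<Rightarrow> nat"
  assumes fin: "finite V" and sy: "symm A V" and v: "v \<in> V" and P: "P \<subseteq> V - {v}"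
  defines "g \<equiv> (\<lambda>w. mcol A V (tp w) w)"
  shows "\<not> (mcol A V 1 v \<in> lspan g P \<and> mcol A V 2 v \<in> lspan g P)"
proof
  assume "mcol A V 1 v \<in> lspan g P \<and> mcol A V 2 v \<in> lspan g P"
  then obtain c d where c: "mcol A V 1 v = lcomb g P c" and d: "mcol A V 2 v = lcomb g P d"
    unfolding lspan_def by blast
  have PV: "P \<subseteq> V" using P by blast
  define x1 where "x1 = (\<lambda>w. if w \<in> P then mu (tp w) * c w else 0)"
  define xd where "xd = (\<lambda>w. if w \<in> P then mu (tp w) * d w else 0)"
  define x2 where "x2 = (\<lambda>w. xd w + (if w = v then 1 else (0::bit)))"
  have A1: "Ay A V x1 i = (if i = v then 1 else 0) + (if i \<in> P then lam (tp i) * c i else 0)" if i: "i \<in> V" for i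
  proof -
    have "mcol A V 1 v i = (if i \<in> P then lam (tp i) * c i else 0) + Ay A V x1 i"
      using c lcomb_mcol[OF fin PV i, where tp=tp and c=c and A=A] unfolding g_def x1_def by simp
    moreover have "mcol A V 1 v i = (if i = v then 1 else 0)" using i
      unfolding mcol_def IAAI_col_def by simp
    ultimately show ?thesis using bit_solve by metis
  qed
  have A2: "Ay A V x2 i = (if i \<in> P then lam (tp i) * d i else 0)" if i: "i \<in> V" for i
  proof -
    have "mcol A V 2 v i = (if i \<in> P then lam (tp i) * d i else 0) + Ay A V xd i"
      using d lcomb_mcol[OF fin PV i, where tp=tp and c=d and A=A] unfolding g_def xd_def by simp
    moreover have "mcol A V 2 v i = A i v" using i unfolding mcol_def IAAI_col_def by simp
    moreover have "Ay A V x2 i = Ay A V xd i + A i v"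
      unfolding x2_def Ay_add Ay_delta[OF fin v] ..
    ultimately show ?thesis by (metis bit_solve add.commute)
  qed
  have "(\<Sum>i\<in>V. x1 i * Ay A V x2 i + x2 i * Ay A V x1 i) = 1"
  proof (rule Phi_split[OF fin v])
    fix i assume i: "i \<in> V - {v}"
    show "x1 i * Ay A V x2 i + x2 i * Ay A V x1 i = 0"
    proof (cases "i \<in> P")
      case True
      then show ?thesis using A1[of i] A2[of i] i
        by (simp add: x1_def x2_def xd_def ac_simps)
    next
      case False
      then show ?thesis using i by (simp add: x1_def x2_def xd_def)
    qed
  next
    have "v \<notin> P" using P by blast
    then show "x1 v * Ay A V x2 v + x2 v * Ay A V x1 v = 1"
      using A1[OF v] by (simp add: x1_def x2_def xd_def)
  qed
  then show False using Phi_zero[OF fin sy, of x1 x2] by simp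
qed


lemma part_unique: "is_partition U \<Omega> \<Longrightarrow> \<omega> \<in> \<Omega> \<Longrightarrow> \<omega>' \<in> \<Omega> \<Longrightarrow> x \<in> \<omega> \<Longrightarrow> x \<in> \<omega>' \<Longrightarrow> \<omega> = \<omega>'"
  unfolding is_partition_def by blast

lemma part_sub: "is_partition U \<Omega> \<Longrightarrow> \<omega> \<in> \<Omega> \<Longrightarrow> \<omega> \<subseteq> U"
  unfolding is_partition_def by blast

lemma part_ex: "is_partition U \<Omega> \<Longrightarrow> x \<in> U \<Longrightarrow> \<exists>\<omega>\<in>\<Omega>. x \<in> \<omega>"
  unfolding is_partition_def by blast

lemma part_finite: "is_partition U \<Omega> \<Longrightarrow> finite U \<Longrightarrow> finite \<Omega>"
  unfolding is_partition_def by (metis finite_UnionD)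

lemma subtrans_sub: "S \<in> subtransversals U \<Omega> \<Longrightarrow> S \<subseteq> U"
  unfolding subtransversals_def by blast

lemma subtrans_subset:
  assumes "finite U" "S \<in> subtransversals U \<Omega>" "T \<subseteq> S"
  shows "T \<in> subtransversals U \<Omega>"
proof -
  have fS: "finite S" using assms subtrans_sub finite_subset by metis
  have "\<forall>\<omega>\<in>\<Omega>. card (T \<inter> \<omega>) \<le> card (S \<inter> \<omega>)"
    using fS assms(3) by (intro ballI card_mono) auto
  then show ?thesis using assms(2,3) unfolding subtransversals_def by force
qed

lemma subtrans_card_le1:
  assumes "finite U" "S \<in> subtransversals U \<Omega>" "\<omega> \<in> \<Omega>" "x \<in> S \<inter> \<omega>" "y \<in> S \<inter> \<omega>"
  shows "x = y"
proof -
  have "card (S \<inter> \<omega>) \<le> 1" using assms(2,3) unfolding subtransversals_def by blast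
  moreover have "finite (S \<inter> \<omega>)" using assms(1,2) subtrans_sub finite_subset by (metis inf.coboundedI1)
  ultimately have "\<forall>a\<in>S \<inter> \<omega>. \<forall>b\<in>S \<inter> \<omega>. a = b" using card_le_Suc0_iff_eq[of "S \<inter> \<omega>"] by simp
  then show ?thesis using assms(4,5) by blast
qed

lemma subtrans_insert:
  assumes "finite U" "is_partition U \<Omega>" "S \<in> subtransversals U \<Omega>" "\<omega> \<in> \<Omega>" "x \<in> \<omega>" "S \<inter> \<omega> = {}"
  shows "insert x S \<in> subtransversals U \<Omega>"
  unfolding subtransversals_def
proof (intro CollectI conjI ballI)
  show "insert x S \<subseteq> U" using assms part_sub subtrans_sub by blast
  fix \<omega>' assume w: "\<omega>' \<in> \<Omega>"
  show "card (insert x S \<inter> \<omega>') \<le> 1"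
  proof (cases "\<omega>' = \<omega>")
    case True
    then have "insert x S \<inter> \<omega>' = {x}" using assms by blast
    then show ?thesis by simp
  next
    case False
    then have "x \<notin> \<omega>'" using part_unique[OF assms(2) assms(4) w assms(5)] by blast
    then have "insert x S \<inter> \<omega>' = S \<inter> \<omega>'" by blast
    then show ?thesis using assms(3) w unfolding subtransversals_def by simp
  qed
qed

lemma card_subtrans:
  assumes "finite U" "is_partition U \<Omega>" "S \<in> subtransversals U \<Omega>"
  shows "card S = card {\<omega>\<in>\<Omega>. S \<inter> \<omega> \<noteq> {}}"
proof -
  let ?F = "{\<omega>\<in>\<Omega>. S \<inter> \<omega> \<noteq> {}}"
  have fO: "finite \<Omega>" using part_finite assms by blast
  have SU: "S \<subseteq> U" using assms subtrans_sub by blast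
  have "S = (\<Union>\<omega>\<in>?F. S \<inter> \<omega>)" using SU assms(2) unfolding is_partition_def by blast
  moreover have "card (\<Union>\<omega>\<in>?F. S \<inter> \<omega>) = (\<Sum>\<omega>\<in>?F. card (S \<inter> \<omega>))"
  proof (rule card_UN_disjoint)
    show "finite ?F" using fO by simp
    show "\<forall>\<omega>\<in>?F. finite (S \<inter> \<omega>)" using assms(1) SU finite_subset by (metis inf.coboundedI1)
    show "\<forall>\<omega>\<in>?F. \<forall>\<omega>'\<in>?F. \<omega> \<noteq> \<omega>' \<longrightarrow> S \<inter> \<omega> \<inter> (S \<inter> \<omega>') = {}"
      using assms(2) unfolding is_partition_def by blast
  qed
  moreover have "\<forall>\<omega>\<in>?F. card (S \<inter> \<omega>) = 1"
  proof
    fix \<omega> assume w: "\<omega> \<in> ?F"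
    have "card (S \<inter> \<omega>) \<le> 1" using assms(3) w unfolding subtransversals_def by blast
    moreover have "finite (S \<inter> \<omega>)" using assms(1) SU finite_subset by (metis inf.coboundedI1)
    moreover have "card (S \<inter> \<omega>) \<noteq> 0" using w \<open>finite (S \<inter> \<omega>)\<close> by simp
    ultimately show "card (S \<inter> \<omega>) = 1" by linarith
  qed
  ultimately show ?thesis by simp
qed

definition ax2 :: "'a set set \<Rightarrow> 'a set set \<Rightarrow> bool" where
  "ax2 \<Omega> \<I> \<longleftrightarrow> (\<forall>I\<in>\<I>. \<forall>\<omega>\<in>\<Omega>. \<forall>x\<in>\<omega>. \<forall>y\<in>\<omega>. x \<noteq> y \<and> \<omega> \<inter> I = {} \<longrightarrow>
         insert x I \<in> \<I> \<or> insert y I \<in> \<I>)"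

definition tightw :: "'a set set \<Rightarrow> 'a set set \<Rightarrow> bool" where
  "tightw \<Omega> \<I> \<longleftrightarrow> (\<forall>S\<in>\<I>. card S = card \<Omega> - 1 \<longrightarrow> (\<forall>\<omega>\<in>\<Omega>. \<omega> \<inter> S = {} \<longrightarrow> (\<exists>x\<in>\<omega>. insert x S \<notin> \<I>)))"

definition mmfam :: "'a set \<Rightarrow> 'a set set \<Rightarrow> 'a set set \<Rightarrow> bool" where
  "mmfam U \<Omega> \<I> \<longleftrightarrow> \<I> \<subseteq> subtransversals U \<Omega> \<and> (\<forall>X\<in>\<I>. \<forall>Y. Y \<subseteq> X \<longrightarrow> Y \<in> \<I>) \<and> ax2 \<Omega> \<I> \<and> tightw \<Omega> \<I>"

lemma extend:
  assumes part: "is_partition U \<Omega>" and fU: "finite U" and sub: "\<I> \<subseteq> subtransversals U \<Omega>" and ax: "ax2 \<Omega> \<I>"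
    and fF: "finite F" and FO: "F \<subseteq> \<Omega>" and J: "J \<in> \<I>" and disj: "\<forall>\<omega>\<in>F. \<omega> \<inter> J = {}"
    and two: "\<forall>\<omega>\<in>F. \<exists>e1 e2. e1 \<in> \<omega> \<inter> E \<and> e2 \<in> \<omega> \<inter> E \<and> e1 \<noteq> e2"
  shows "\<exists>S\<in>\<I>. J \<subseteq> S \<and> S - J \<subseteq> E \<inter> \<Union>F \<and> (\<forall>\<omega>\<in>F. S \<inter> \<omega> \<noteq> {})"
  using fF FO disj two
proof (induction F rule: finite_induct)
  case empty
  then show ?case using J by blast
next
  case (insert \<omega> F)
  have p1: "F \<subseteq> \<Omega>" "\<forall>\<omega>\<in>F. \<omega> \<inter> J = {}" "\<forall>\<omega>\<in>F. \<exists>e1 e2. e1 \<in> \<omega> \<inter> E \<and> e2 \<in> \<omega> \<inter> E \<and> e1 \<noteq> e2"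
    using insert.prems by auto
  obtain S where S: "S \<in> \<I>" "J \<subseteq> S" "S - J \<subseteq> E \<inter> \<Union>F" "\<forall>\<omega>\<in>F. S \<inter> \<omega> \<noteq> {}"
    using insert.IH[OF p1] by blast
  have wO: "\<omega> \<in> \<Omega>" using insert.prems by blast
  have wJ: "\<omega> \<inter> J = {}" using insert.prems by blast
  have wF: "\<omega> \<inter> \<Union>F = {}"
  proof (rule ccontr)
    assume "\<omega> \<inter> \<Union>F \<noteq> {}"
    then obtain x \<omega>' where x: "x \<in> \<omega>" "\<omega>' \<in> F" "x \<in> \<omega>'" by blast
    then have "\<omega> = \<omega>'" using part_unique[OF part wO, of \<omega>' x] p1(1) by blast
    then show False using x(2) insert.hyps(2) by simp
  qed
  have wS: "\<omega> \<inter> S = {}"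
  proof -
    have "S \<subseteq> J \<union> \<Union>F" using S(3) by blast
    then show ?thesis using wJ wF by blast
  qed
  obtain e1 e2 where e: "e1 \<in> \<omega> \<inter> E" "e2 \<in> \<omega> \<inter> E" "e1 \<noteq> e2" using insert.prems(3) by blast
  have "insert e1 S \<in> \<I> \<or> insert e2 S \<in> \<I>"
    using ax S(1) wO wS e unfolding ax2_def by blast
  then obtain e where ee: "e \<in> \<omega> \<inter> E" "insert e S \<in> \<I>" using e by blast
  have "J \<subseteq> insert e S" using S(2) by blast
  moreover have "insert e S - J \<subseteq> E \<inter> \<Union>(insert \<omega> F)" using S(3) ee(1) by blast
  moreover have "\<forall>\<omega>'\<in>insert \<omega> F. insert e S \<inter> \<omega>' \<noteq> {}" using S(4) ee(1) by blast
  ultimately show ?case using ee(2) by blast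
qed

lemma three_two:
  assumes "card \<omega> = 3" "card (B \<inter> \<omega>) = 1"
  shows "\<exists>e1 e2. e1 \<in> \<omega> - B \<and> e2 \<in> \<omega> - B \<and> e1 \<noteq> e2"
proof -
  have f: "finite \<omega>" using assms(1) card.infinite by fastforce
  have "card (\<omega> - B) = card \<omega> - card (\<omega> \<inter> B)" using f by (intro card_Diff_subset_Int) simp
  then have "card (\<omega> - B) = 2" using assms by (simp add: Int_commute)
  then show ?thesis by (metis card_2_iff insertI1 insertI2)
qed


lemma agree_step:
  assumes part: "is_partition U \<Omega>" and fU: "finite U" and card3: "\<forall>\<omega>\<in>\<Omega>. card \<omega> = 3"
    and Bp: "\<forall>\<omega>\<in>\<Omega>. card (B \<inter> \<omega>) = 1"
    and ma: "mmfam U \<Omega> Ia" and mb: "mmfam U \<Omega> Ib"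
    and IH: "\<forall>Z\<in>subtransversals U \<Omega>. card (Z \<inter> B) < card (X \<inter> B) \<longrightarrow> (Z \<in> Ia \<longleftrightarrow> Z \<in> Ib)"
    and base: "\<forall>Z\<in>subtransversals U \<Omega>. Z \<inter> B = {} \<longrightarrow> (Z \<in> Ia \<longleftrightarrow> Z \<in> Ib)"
    and X: "X \<in> Ia"
  shows "X \<in> Ib"
proof (rule ccontr)
  assume nX: "X \<notin> Ib"
  have subA: "Ia \<subseteq> subtransversals U \<Omega>" and herA: "\<forall>X\<in>Ia. \<forall>Y. Y \<subseteq> X \<longrightarrow> Y \<in> Ia"
    and axA: "ax2 \<Omega> Ia" and tA: "tightw \<Omega> Ia" using ma unfolding mmfam_def by auto
  have subB: "Ib \<subseteq> subtransversals U \<Omega>" and herB: "\<forall>X\<in>Ib. \<forall>Y. Y \<subseteq> X \<longrightarrow> Y \<in> Ib"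
    and axB: "ax2 \<Omega> Ib" using mb unfolding mmfam_def by auto
  have Xs: "X \<in> subtransversals U \<Omega>" using X subA by blast
  have XU: "X \<subseteq> U" using Xs subtrans_sub by blast
  have fX: "finite X" using XU fU finite_subset by blast
  have "X \<inter> B \<noteq> {}" using base Xs X nX by blast
  then obtain b where b: "b \<in> X" "b \<in> B" by blast
  obtain \<omega> where w: "\<omega> \<in> \<Omega>" "b \<in> \<omega>" using part_ex[OF part] XU b by blast
  have fO: "finite \<Omega>" using part_finite[OF part fU] .
  define Y where "Y = X - {b}"
  have Yw: "Y \<inter> \<omega> = {}"
  proof (rule ccontr)
    assume "Y \<inter> \<omega> \<noteq> {}"
    then obtain y where "y \<in> Y" "y \<in> \<omega>" by blast
    then show False using subtrans_card_le1[OF fU Xs w(1), of y b] b w unfolding Y_def by blast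
  qed
  define F where "F = {\<omega>'\<in>\<Omega>. \<omega>' \<noteq> \<omega> \<and> \<omega>' \<inter> Y = {}}"
  have fF: "finite F" "F \<subseteq> \<Omega>" using fO unfolding F_def by auto
  have dF: "\<forall>\<omega>'\<in>F. \<omega>' \<inter> X = {}"
  proof
    fix \<omega>' assume w': "\<omega>' \<in> F"
    have "b \<notin> \<omega>'" using part_unique[OF part w(1), of \<omega>' b] w w' unfolding F_def by blast
    then show "\<omega>' \<inter> X = {}" using w' unfolding F_def Y_def by blast
  qed
  have two: "\<forall>\<omega>'\<in>F. \<exists>e1 e2. e1 \<in> \<omega>' \<inter> (U - B) \<and> e2 \<in> \<omega>' \<inter> (U - B) \<and> e1 \<noteq> e2"
  proof
    fix \<omega>' assume w': "\<omega>' \<in> F"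
    then have "\<omega>' \<in> \<Omega>" using fF by blast
    then have "\<exists>e1 e2. e1 \<in> \<omega>' - B \<and> e2 \<in> \<omega>' - B \<and> e1 \<noteq> e2" using three_two card3 Bp by blast
    moreover have "\<omega>' \<subseteq> U" using part_sub[OF part \<open>\<omega>' \<in> \<Omega>\<close>] .
    ultimately show "\<exists>e1 e2. e1 \<in> \<omega>' \<inter> (U - B) \<and> e2 \<in> \<omega>' \<inter> (U - B) \<and> e1 \<noteq> e2" by blast
  qed
  obtain S' where S': "S' \<in> Ia" "X \<subseteq> S'" "S' - X \<subseteq> (U - B) \<inter> \<Union>F" "\<forall>\<omega>'\<in>F. S' \<inter> \<omega>' \<noteq> {}"
    using extend[OF part fU subA axA fF X dF two] by blast
  have S's: "S' \<in> subtransversals U \<Omega>" using S'(1) subA by blast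
  define S where "S = S' - {b}"
  have S'eq: "S' = insert b S" using S'(2) b(1) unfolding S_def by blast
  have Sw: "S \<inter> \<omega> = {}"
  proof (rule ccontr)
    assume "S \<inter> \<omega> \<noteq> {}"
    then obtain y where "y \<in> S" "y \<in> \<omega>" by blast
    then show False using subtrans_card_le1[OF fU S's w(1), of y b] b w S'(2) unfolding S_def by blast
  qed
  have SA: "S \<in> Ia" using herA S'(1) unfolding S_def by blast
  have Ss: "S \<in> subtransversals U \<Omega>" using SA subA by blast
  have fXB: "finite (X \<inter> B)" using fX by simp
  have SB: "S \<inter> B \<subseteq> (X \<inter> B) - {b}" using S'(3) unfolding S_def by blast
  have cSB: "card (S \<inter> B) < card (X \<inter> B)"
  proof -
    have "S \<inter> B \<subset> X \<inter> B" using SB b by blast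
    then show ?thesis using fXB psubset_card_mono by blast
  qed
  have cS: "card S = card \<Omega> - 1"
  proof -
    have "{\<omega>'\<in>\<Omega>. S \<inter> \<omega>' \<noteq> {}} = \<Omega> - {\<omega>}"
    proof (intro equalityI subsetI)
      fix \<omega>' assume "\<omega>' \<in> {\<omega>'\<in>\<Omega>. S \<inter> \<omega>' \<noteq> {}}"
      then show "\<omega>' \<in> \<Omega> - {\<omega>}" using Sw by blast
    next
      fix \<omega>' assume w': "\<omega>' \<in> \<Omega> - {\<omega>}"
      have "b \<notin> \<omega>'" using part_unique[OF part w(1), of \<omega>' b] w w' by blast
      show "\<omega>' \<in> {\<omega>'\<in>\<Omega>. S \<inter> \<omega>' \<noteq> {}}"
      proof (cases "\<omega>' \<inter> Y = {}")
        case True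
        then have "\<omega>' \<in> F" using w' unfolding F_def by blast
        then have "S' \<inter> \<omega>' \<noteq> {}" using S'(4) by blast
        then show ?thesis using w' \<open>b \<notin> \<omega>'\<close> unfolding S_def by blast
      next
        case False
        then show ?thesis using w' S'(2) unfolding S_def Y_def by blast
      qed
    qed
    then show ?thesis using card_subtrans[OF fU part Ss] w(1) fO by simp
  qed
  obtain x where x: "x \<in> \<omega>" "insert x S \<notin> Ia" using tA SA cS w(1) Sw unfolding tightw_def by blast
  have xb: "x \<noteq> b" using x S'(1) S'eq by blast
  have xB: "x \<notin> B"
  proof
    assume "x \<in> B"
    then have "x \<in> B \<inter> \<omega>" "b \<in> B \<inter> \<omega>" using x w b by auto
    moreover have "card (B \<inter> \<omega>) = 1" using Bp w(1) by blast
    then obtain z where "B \<inter> \<omega> = {z}" by (rule card_1_singletonE)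
    ultimately show False using xb by (metis singletonD)
  qed
  have xS: "insert x S \<in> subtransversals U \<Omega>" using subtrans_insert[OF fU part Ss w(1) x(1) Sw] .
  have c2: "card (insert x S \<inter> B) < card (X \<inter> B)" using cSB xB by simp
  have "S \<in> Ib" using IH Ss cSB SA by blast
  moreover have "insert x S \<notin> Ib" using IH xS c2 x(2) by blast
  moreover have "insert b S \<notin> Ib" using herB nX S'eq S'(2) by blast
  moreover have "insert x S \<in> Ib \<or> insert b S \<in> Ib"
  proof -
    have "\<forall>I\<in>Ib. \<forall>\<omega>\<in>\<Omega>. \<forall>x\<in>\<omega>. \<forall>y\<in>\<omega>. x \<noteq> y \<and> \<omega> \<inter> I = {} \<longrightarrow> insert x I \<in> Ib \<or> insert y I \<in> Ib"
      using axB unfolding ax2_def .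
    then have "\<forall>x\<in>\<omega>. \<forall>y\<in>\<omega>. x \<noteq> y \<and> \<omega> \<inter> S = {} \<longrightarrow> insert x S \<in> Ib \<or> insert y S \<in> Ib"
      using \<open>S \<in> Ib\<close> w(1) by blast
    then show ?thesis using x(1) w(2) xb Sw by blast
  qed
  ultimately show False by blast
qed

lemma agree:
  assumes part: "is_partition U \<Omega>" and fU: "finite U" and card3: "\<forall>\<omega>\<in>\<Omega>. card \<omega> = 3"
    and Bp: "\<forall>\<omega>\<in>\<Omega>. card (B \<inter> \<omega>) = 1"
    and m1: "mmfam U \<Omega> I1" and m2: "mmfam U \<Omega> I2"
    and base: "\<forall>Z\<in>subtransversals U \<Omega>. Z \<inter> B = {} \<longrightarrow> (Z \<in> I1 \<longleftrightarrow> Z \<in> I2)"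
  shows "I1 = I2"
proof -
  have main: "\<And>n X. card (X \<inter> B) = n \<Longrightarrow> X \<in> subtransversals U \<Omega> \<Longrightarrow> (X \<in> I1 \<longleftrightarrow> X \<in> I2)"
  proof -
    fix n show "\<And>X. card (X \<inter> B) = n \<Longrightarrow> X \<in> subtransversals U \<Omega> \<Longrightarrow> (X \<in> I1 \<longleftrightarrow> X \<in> I2)"
    proof (induction n rule: less_induct)
      case (less n)
      have IH1: "\<forall>Z\<in>subtransversals U \<Omega>. card (Z \<inter> B) < card (X \<inter> B) \<longrightarrow> (Z \<in> I1 \<longleftrightarrow> Z \<in> I2)"
        using less by blast
      have IH2: "\<forall>Z\<in>subtransversals U \<Omega>. card (Z \<inter> B) < card (X \<inter> B) \<longrightarrow> (Z \<in> I2 \<longleftrightarrow> Z \<in> I1)"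
        using IH1 by blast
      have base2: "\<forall>Z\<in>subtransversals U \<Omega>. Z \<inter> B = {} \<longrightarrow> (Z \<in> I2 \<longleftrightarrow> Z \<in> I1)" using base by blast
      show ?case
        using agree_step[OF part fU card3 Bp m1 m2 IH1 base] agree_step[OF part fU card3 Bp m2 m1 IH2 base2] by blast
    qed
  qed
  have s1: "I1 \<subseteq> subtransversals U \<Omega>" "I2 \<subseteq> subtransversals U \<Omega>" using m1 m2 unfolding mmfam_def by auto
  show ?thesis using main s1 by blast
qed


lemma fam_finite: "finite S \<Longrightarrow> finite {card I | I. I \<in> \<I> \<and> I \<subseteq> S}"
proof -
  assume "finite S"
  have "{card I | I. I \<in> \<I> \<and> I \<subseteq> S} \<subseteq> card ` Pow S" by blast
  then show ?thesis using \<open>finite S\<close> finite_subset by blast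
qed

lemma mm_rank_le:
  assumes "finite S" "{} \<in> \<I>"
  shows "mm_rank \<I> S \<le> card S"
  unfolding mm_rank_def
proof (rule Max.boundedI)
  show "finite {card I | I. I \<in> \<I> \<and> I \<subseteq> S}" using assms(1) by (rule fam_finite)
  show "{card I | I. I \<in> \<I> \<and> I \<subseteq> S} \<noteq> {}" using assms(2) by blast
  fix a assume "a \<in> {card I | I. I \<in> \<I> \<and> I \<subseteq> S}"
  then obtain I where "a = card I" "I \<subseteq> S" by blast
  then show "a \<le> card S" using assms(1) card_mono by blast
qed

lemma mm_rank_ge:
  assumes "finite S" "I \<in> \<I>" "I \<subseteq> S"
  shows "card I \<le> mm_rank \<I> S"
  unfolding mm_rank_def
proof (rule Max_ge)
  show "finite {card I | I. I \<in> \<I> \<and> I \<subseteq> S}" using assms(1) by (rule fam_finite)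
  show "card I \<in> {card I | I. I \<in> \<I> \<and> I \<subseteq> S}" using assms(2,3) by blast
qed

lemma tight_tightw:
  assumes fU: "finite U" and sub: "\<I> \<subseteq> subtransversals U \<Omega>" and t: "tight U \<Omega> \<I>"
    and her: "\<forall>X\<in>\<I>. \<forall>Y. Y \<subseteq> X \<longrightarrow> Y \<in> \<I>"
  shows "tightw \<Omega> \<I>"
  unfolding tightw_def
proof (intro ballI impI allI)
  fix S \<omega> assume S: "S \<in> \<I>" and c: "card S = card \<Omega> - 1" and w: "\<omega> \<in> \<Omega>" and d: "\<omega> \<inter> S = {}"
  have Ss: "S \<in> subtransversals U \<Omega>" using S sub by blast
  have fS: "finite S" using finite_subset[OF subtrans_sub[OF Ss] fU] .
  have tt: "\<forall>S\<in>subtransversals U \<Omega>. card S = card \<Omega> - 1 \<longrightarrow>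
        (\<forall>\<omega>\<in>\<Omega>. \<omega> \<inter> S = {} \<longrightarrow> (\<exists>x\<in>\<omega>. mm_rank \<I> (insert x S) = mm_rank \<I> S))"
    using t unfolding tight_def by (rule conjunct2)
  obtain x where x: "x \<in> \<omega>" "mm_rank \<I> (insert x S) = mm_rank \<I> S"
    using tt Ss c w d by meson
  have e: "{} \<in> \<I>" using S her by blast
  show "\<exists>x\<in>\<omega>. insert x S \<notin> \<I>"
  proof (rule bexI[OF _ x(1)], rule notI)
    assume "insert x S \<in> \<I>"
    then have "card (insert x S) \<le> mm_rank \<I> (insert x S)" using fS mm_rank_ge[of "insert x S" "insert x S" \<I>] by blast
    moreover have "x \<notin> S" using x(1) d by blast
    then have "card (insert x S) = card S + 1" using fS by simp
    moreover have "mm_rank \<I> S \<le> card S" using mm_rank_le[OF fS] e by blast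
    ultimately show False using x(2) by simp
  qed
qed

lemma rank_span:
  assumes fU: "finite U" and Ss: "S \<in> subtransversals U \<Omega>" and xS: "insert x S \<in> subtransversals U \<Omega>"
    and sp: "col x \<in> lspan col S"
    and II: "\<I> = sheltered_indep U (column_matroid U col) \<Omega>"
  shows "mm_rank \<I> (insert x S) = mm_rank \<I> S"
proof -
  have memb: "J \<in> \<I> \<longleftrightarrow> gf2_indep col J" if "J \<subseteq> insert x S" for J
  proof -
    have "J \<in> subtransversals U \<Omega>" using subtrans_subset[OF fU xS that] .
    then show ?thesis using subtrans_sub unfolding II sheltered_indep_def column_matroid_def by blast
  qed
  have fxS: "finite (insert x S)" using finite_subset[OF subtrans_sub[OF xS] fU] .
  then have fS: "finite S" by simp
  have ne: "{} \<in> \<I>" using memb by simp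
  let ?F = "\<lambda>T. {card I | I. I \<in> \<I> \<and> I \<subseteq> T}"
  have fF: "finite (?F S)" "finite (?F (insert x S))" using fam_finite fS fxS by blast+
  have neF: "?F S \<noteq> {}" using ne by blast
  have ge: "mm_rank \<I> S \<le> mm_rank \<I> (insert x S)"
    unfolding mm_rank_def by (rule Max_mono) (use fF neF in auto)
  have "Max (?F S) \<in> ?F S" using fF(1) neF by (rule Max_in)
  then obtain B where B: "B \<in> \<I>" "B \<subseteq> S" "card B = mm_rank \<I> S" unfolding mm_rank_def by auto
  have fB: "finite B" using B(2) fS finite_subset by blast
  have Bi: "gf2_indep col B" using memb B by blast
  have allB: "\<forall>s\<in>S. col s \<in> lspan col B"
  proof
    fix s assume s: "s \<in> S"
    show "col s \<in> lspan col B"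
    proof (cases "s \<in> B")
      case True then show ?thesis using in_lspan_self[OF fB] by blast
    next
      case False
      show ?thesis
      proof (rule ccontr)
        assume "col s \<notin> lspan col B"
        then have "gf2_indep col (insert s B)" using indep_insert[OF fB False Bi] by blast
        then have "insert s B \<in> \<I>" using memb s B(2) by blast
        then have "card (insert s B) \<le> mm_rank \<I> S" using mm_rank_ge[OF fS] s B(2) by blast
        then show False using B(3) fB False by simp
      qed
    qed
  qed
  have xB: "col x \<in> lspan col B" using lspan_trans[OF fB fS allB] sp by blast
  have le: "mm_rank \<I> (insert x S) \<le> card B"
    unfolding mm_rank_def
  proof (rule Max.boundedI)
    show "finite (?F (insert x S))" by fact
    show "?F (insert x S) \<noteq> {}" using ne by blast
    fix a assume "a \<in> ?F (insert x S)"
    then obtain J where J: "a = card J" "J \<in> \<I>" "J \<subseteq> insert x S" by blast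
    have fJ: "finite J" using J(3) fxS finite_subset by blast
    have "\<forall>j\<in>J. col j \<in> lspan col B" using J(3) allB xB by blast
    then show "a \<le> card B" using steinitz[OF fB fJ] memb J by blast
  qed
  show ?thesis using ge le B(3) by simp
qed


lemma lspan_reindex:
  assumes "inj_on h P" "\<forall>w\<in>P. col (h w) = g w"
  shows "lspan col (h ` P) = lspan g P"
proof (intro equalityI subsetI)
  fix f assume "f \<in> lspan col (h ` P)"
  then obtain c where c: "f = lcomb col (h ` P) c" unfolding lspan_def by blast
  have "lcomb col (h ` P) c = lcomb g P (\<lambda>w. c (h w))"
    unfolding lcomb_def
  proof (rule ext, rule sum.reindex_cong[OF assms(1) refl])
    fix i w assume "w \<in> P"
    then show "c (h w) * col (h w) i = c (h w) * g w i" using assms(2) by simp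
  qed
  then show "f \<in> lspan g P" using c unfolding lspan_def by blast
next
  fix f assume "f \<in> lspan g P"
  then obtain d where d: "f = lcomb g P d" unfolding lspan_def by blast
  have "lcomb col (h ` P) (\<lambda>x. d (inv_into P h x)) = lcomb g P d"
    unfolding lcomb_def
  proof (rule ext, rule sum.reindex_cong[OF assms(1) refl])
    fix i w assume w: "w \<in> P"
    then show "d (inv_into P h (h w)) * col (h w) i = d w * g w i"
      using assms(2) inv_into_f_f[OF assms(1) w] by simp
  qed
  then show "f \<in> lspan col (h ` P)" using d unfolding lspan_def by (metis (mono_tags, lifting) mem_Collect_eq)
qed

lemma bit_aab: "a + (a + b) = (b::bit)" by (cases a; cases b) simp_all
lemma bit_bab: "b + (a + b) = (a::bit)" by (cases a; cases b) simp_all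

lemma gf2_indep_cong: "(\<And>x. x \<in> X \<Longrightarrow> col x = col' x) \<Longrightarrow> gf2_indep col X \<longleftrightarrow> gf2_indep col' X"
  unfolding gf2_indep_def by (metis (no_types, lifting) sum.cong)

lemma meets_all:
  assumes fU: "finite U" and part: "is_partition U \<Omega>" and Ss: "S \<in> subtransversals U \<Omega>"
    and c: "card S = card \<Omega> - 1" and w: "\<omega> \<in> \<Omega>" and d: "\<omega> \<inter> S = {}"
  shows "\<forall>\<omega>'\<in>\<Omega> - {\<omega>}. S \<inter> \<omega>' \<noteq> {}"
proof -
  have fO: "finite \<Omega>" using part_finite[OF part fU] .
  have sub: "{\<omega>'\<in>\<Omega>. S \<inter> \<omega>' \<noteq> {}} \<subseteq> \<Omega> - {\<omega>}" using d by blast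
  have "card {\<omega>'\<in>\<Omega>. S \<inter> \<omega>' \<noteq> {}} = card (\<Omega> - {\<omega>})"
    using card_subtrans[OF fU part Ss] c w fO by simp
  then have "{\<omega>'\<in>\<Omega>. S \<inter> \<omega>' \<noteq> {}} = \<Omega> - {\<omega>}" using card_subset_eq[OF _ sub] fO by blast
  then show ?thesis by blast
qed

locale model =
  fixes U :: "'a set" and \<Omega> :: "'a set set" and V :: "nat set" and A :: "nat \<Rightarrow> nat \<Rightarrow> bit"
    and u :: "nat \<Rightarrow> nat \<Rightarrow> 'a" and col :: "'a \<Rightarrow> nat \<Rightarrow> bit"
  assumes finV: "finite V" and sy: "symm A V"
    and inj: "inj_on (\<lambda>(k, v). u k v) ({1,2,3} \<times> V)"
    and Ueq: "U = (\<lambda>(k, v). u k v) ` ({1,2,3} \<times> V)"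
    and Oeq: "\<Omega> = {{u 1 v, u 2 v, u 3 v} | v. v \<in> V}"
    and colu: "\<forall>k\<in>{1,2,3}. \<forall>v\<in>V. col (u k v) = mcol A V k v"
begin

definition cls :: "nat \<Rightarrow> 'a set" where "cls v = {u 1 v, u 2 v, u 3 v}"

abbreviation "MM \<equiv> column_matroid U col"
abbreviation "II \<equiv> sheltered_indep U MM \<Omega>"

lemma u_eq: "k \<in> {1,2,3} \<Longrightarrow> k' \<in> {1,2,3} \<Longrightarrow> v \<in> V \<Longrightarrow> v' \<in> V \<Longrightarrow> u k v = u k' v' \<Longrightarrow> k = k' \<and> v = v'"
  using inj_onD[OF inj, of "(k,v)" "(k',v')"] by auto

lemma uU: "k \<in> {1,2,3} \<Longrightarrow> v \<in> V \<Longrightarrow> u k v \<in> U"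
  using Ueq by auto

lemma U_elem: "x \<in> U \<Longrightarrow> \<exists>k\<in>{1,2,3}. \<exists>v\<in>V. x = u k v"
  using Ueq by auto

lemma finU: "finite U" using Ueq finV by simp

lemma Oeq': "\<Omega> = cls ` V" unfolding Oeq cls_def by blast

lemma cls_mem: "x \<in> cls v \<Longrightarrow> \<exists>k\<in>{1,2,3}. x = u k v"
  unfolding cls_def by auto

lemma cls_card: "v \<in> V \<Longrightarrow> card (cls v) = 3"
proof -
  assume v: "v \<in> V"
  have "u 1 v \<noteq> u 2 v" using u_eq[of 1 2 v v] v by auto
  moreover have "u 1 v \<noteq> u 3 v" using u_eq[of 1 3 v v] v by auto
  moreover have "u 2 v \<noteq> u 3 v" using u_eq[of 2 3 v v] v by auto
  ultimately show ?thesis unfolding cls_def by simp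
qed

lemma cls_disj: "v \<in> V \<Longrightarrow> w \<in> V \<Longrightarrow> x \<in> cls v \<Longrightarrow> x \<in> cls w \<Longrightarrow> v = w"
proof -
  assume a: "v \<in> V" "w \<in> V" "x \<in> cls v" "x \<in> cls w"
  obtain k where k: "k \<in> {1,2,3}" "x = u k v" using cls_mem[OF a(3)] by blast
  obtain k' where k': "k' \<in> {1,2,3}" "x = u k' w" using cls_mem[OF a(4)] by blast
  show "v = w" using u_eq[OF k(1) k'(1) a(1,2)] k k' by simp
qed

lemma cls_sub: "v \<in> V \<Longrightarrow> cls v \<subseteq> U"
  unfolding cls_def using uU by auto

lemma part: "is_partition U \<Omega>"
  unfolding is_partition_def
proof (intro conjI ballI impI)
  fix \<omega> assume "\<omega> \<in> \<Omega>" then show "\<omega> \<noteq> {}" unfolding Oeq by blast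
next
  show "\<Union>\<Omega> = U"
  proof
    show "\<Union>\<Omega> \<subseteq> U" unfolding Oeq' using cls_sub by blast
    show "U \<subseteq> \<Union>\<Omega>"
    proof
      fix x assume "x \<in> U"
      then obtain k v where "k \<in> {1,2,3}" "v \<in> V" "x = u k v" using U_elem by blast
      then have "x \<in> cls v" unfolding cls_def by auto
      then show "x \<in> \<Union>\<Omega>" using \<open>v \<in> V\<close> unfolding Oeq' by blast
    qed
  qed
next
  fix \<omega> \<omega>' assume "\<omega> \<in> \<Omega>" "\<omega>' \<in> \<Omega>" "\<omega> \<noteq> \<omega>'"
  then show "\<omega> \<inter> \<omega>' = {}" unfolding Oeq' using cls_disj by blast
qed

lemma card_Omega: "card \<Omega> = card V"
proof -
  have "inj_on cls V"
  proof
    fix v w assume "v \<in> V" "w \<in> V" "cls v = cls w"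
    then show "v = w" using cls_disj[of v w "u 1 v"] unfolding cls_def by auto
  qed
  then show ?thesis unfolding Oeq' by (simp add: card_image)
qed

lemma col_supp: "x \<in> U \<Longrightarrow> i \<notin> V \<Longrightarrow> col x i = 0"
  using U_elem colu mcol_supp by metis

lemma II_iff: "X \<in> II \<longleftrightarrow> X \<in> subtransversals U \<Omega> \<and> gf2_indep col X"
  unfolding sheltered_indep_def column_matroid_def using subtrans_sub by blast

lemma subtrans_repr:
  assumes S: "S \<in> subtransversals U \<Omega>"
  shows "\<exists>P tp. P \<subseteq> V \<and> (\<forall>w\<in>P. tp w \<in> {1,2,3}) \<and> S = (\<lambda>w. u (tp w) w) ` P \<and>
     inj_on (\<lambda>w. u (tp w) w) P \<and> (\<forall>w\<in>V. S \<inter> cls w \<noteq> {} \<longleftrightarrow> w \<in> P)"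
proof -
  define P where "P = {w\<in>V. S \<inter> cls w \<noteq> {}}"
  define tp where "tp = (\<lambda>w. SOME k. k \<in> {1,2,3} \<and> u k w \<in> S)"
  have tp: "tp w \<in> {1,2,3} \<and> u (tp w) w \<in> S" if "w \<in> P" for w
  proof -
    have "\<exists>k. k \<in> {1,2,3} \<and> u k w \<in> S" using that cls_mem unfolding P_def by blast
    then show ?thesis unfolding tp_def by (rule someI_ex)
  qed
  have SU: "S \<subseteq> U" using S subtrans_sub by blast
  have eq: "S = (\<lambda>w. u (tp w) w) ` P"
  proof
    show "S \<subseteq> (\<lambda>w. u (tp w) w) ` P"
    proof
      fix s assume s: "s \<in> S"
      then obtain k v where kv: "k \<in> {1,2,3}" "v \<in> V" "s = u k v" using SU U_elem by blast
      then have sc: "s \<in> cls v" unfolding cls_def by auto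
      then have vP: "v \<in> P" unfolding P_def using s kv by blast
      have "u (tp v) v \<in> cls v" using tp[OF vP] unfolding cls_def by auto
      moreover have "cls v \<in> \<Omega>" using kv unfolding Oeq' by blast
      ultimately have "s = u (tp v) v" using subtrans_card_le1[OF finU S, of "cls v" s "u (tp v) v"] s sc tp[OF vP] by blast
      then show "s \<in> (\<lambda>w. u (tp w) w) ` P" using vP by blast
    qed
    show "(\<lambda>w. u (tp w) w) ` P \<subseteq> S" using tp by blast
  qed
  have "inj_on (\<lambda>w. u (tp w) w) P"
  proof
    fix v w assume "v \<in> P" "w \<in> P" "u (tp v) v = u (tp w) w"
    then show "v = w" using u_eq tp unfolding P_def by blast
  qed
  moreover have "P \<subseteq> V" unfolding P_def by blast
  ultimately show ?thesis using tp eq unfolding P_def by blast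
qed

lemma lspan_S:
  assumes "P \<subseteq> V" "\<forall>w\<in>P. tp w \<in> {1,2,3}" "inj_on (\<lambda>w. u (tp w) w) P"
  shows "lspan col ((\<lambda>w. u (tp w) w) ` P) = lspan (\<lambda>w. mcol A V (tp w) w) P"
proof (rule lspan_reindex[OF assms(3)], intro ballI)
  fix w assume w: "w \<in> P"
  then have "tp w \<in> {1,2,3}" "w \<in> V" using assms by auto
  then show "col (u (tp w) w) = mcol A V (tp w) w" using colu by blast
qed

lemma model_sh:
  assumes Y: "Y \<in> subtransversals U \<Omega>" and v: "v \<in> V" and d: "Y \<inter> cls v = {}"
  shows "\<not> (mcol A V 1 v \<in> lspan col Y \<and> mcol A V 2 v \<in> lspan col Y)"
proof -
  obtain P tp where P: "P \<subseteq> V" "\<forall>w\<in>P. tp w \<in> {1,2,3}" "Y = (\<lambda>w. u (tp w) w) ` P"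
     "inj_on (\<lambda>w. u (tp w) w) P" "\<forall>w\<in>V. Y \<inter> cls w \<noteq> {} \<longleftrightarrow> w \<in> P"
    using subtrans_repr[OF Y] by blast
  have "P \<subseteq> V - {v}" using P(1,5) d v by blast
  then show ?thesis using shcore[OF finV sy v, of P tp] lspan_S[OF P(1,2,4)] P(3) by simp
qed

lemma model_tc:
  assumes S: "S \<in> subtransversals U \<Omega>" and v: "v \<in> V" and d: "S \<inter> cls v = {}"
    and all: "\<forall>w\<in>V - {v}. S \<inter> cls w \<noteq> {}"
  shows "\<exists>x\<in>cls v. col x \<in> lspan col S"
proof -
  obtain P tp where P: "P \<subseteq> V" "\<forall>w\<in>P. tp w \<in> {1,2,3}" "S = (\<lambda>w. u (tp w) w) ` P"
     "inj_on (\<lambda>w. u (tp w) w) P" "\<forall>w\<in>V. S \<inter> cls w \<noteq> {} \<longleftrightarrow> w \<in> P"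
    using subtrans_repr[OF S] by blast
  have PV: "P = V - {v}" using P(1,5) d v all by blast
  obtain k where k: "k \<in> {1,2,3}" "mcol A V k v \<in> lspan (\<lambda>w. mcol A V (tp w) w) (V - {v})"
    using tcore[OF finV sy v, of tp] by blast
  have "col (u k v) = mcol A V k v" using colu k(1) v by blast
  then have "col (u k v) \<in> lspan col S" using k lspan_S[OF P(1,2,4)] P(3) PV by simp
  moreover have "u k v \<in> cls v" using k unfolding cls_def by auto
  ultimately show ?thesis by blast
qed

lemma class_of: "\<omega> \<in> \<Omega> \<Longrightarrow> \<exists>v\<in>V. \<omega> = cls v"
  unfolding Oeq' by blast

lemma model_ax2: "ax2 \<Omega> II"
  unfolding ax2_def
proof (intro ballI impI)
  fix I \<omega> x y assume I: "I \<in> II" and w: "\<omega> \<in> \<Omega>" and x: "x \<in> \<omega>" and y: "y \<in> \<omega>" and xy: "x \<noteq> y \<and> \<omega> \<inter> I = {}"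
  obtain v where v: "v \<in> V" "\<omega> = cls v" using class_of w by blast
  have Is: "I \<in> subtransversals U \<Omega>" and Ii: "gf2_indep col I" using I II_iff by auto
  have fI: "finite I" using finite_subset[OF subtrans_sub[OF Is] finU] .
  show "insert x I \<in> II \<or> insert y I \<in> II"
  proof (rule ccontr)
    assume "\<not> ?thesis"
    then have nx: "\<not> gf2_indep col (insert x I)" and ny: "\<not> gf2_indep col (insert y I)"
      using subtrans_insert[OF finU part Is w] x y xy II_iff by auto
    have "x \<notin> I" "y \<notin> I" using x y xy by auto
    then have sx: "col x \<in> lspan col I" and sy': "col y \<in> lspan col I"
      using indep_insert[OF fI _ Ii] nx ny by auto
    obtain k where k: "k \<in> {1,2,3}" "x = u k v" using cls_mem x v by blast
    obtain k' where k': "k' \<in> {1,2,3}" "y = u k' v" using cls_mem y v by blast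
    have kk: "k \<noteq> k'" using k k' xy by blast
    have m1: "mcol A V k v \<in> lspan col I" "mcol A V k' v \<in> lspan col I"
      using sx sy' k k' colu v by auto
    have m3: "mcol A V 3 v = (\<lambda>i. mcol A V 1 v i + mcol A V 2 v i)" by (rule mcol3)
    have e13: "mcol A V 2 v = (\<lambda>i. mcol A V 1 v i + mcol A V 3 v i)"
      unfolding m3 by (rule ext) (rule bit_aab[symmetric])
    have e23: "mcol A V 1 v = (\<lambda>i. mcol A V 2 v i + mcol A V 3 v i)"
      unfolding m3 by (rule ext) (rule bit_bab[symmetric])
    have in1: "mcol A V 1 v \<in> lspan col I"
    proof (cases "k = 1 \<or> k' = 1")
      case True then show ?thesis using m1 by auto
    next
      case False
      then have "k = 2 \<and> k' = 3 \<or> k = 3 \<and> k' = 2" using k k' kk by auto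
      then have "mcol A V 2 v \<in> lspan col I" "mcol A V 3 v \<in> lspan col I" using m1 by auto
      then show ?thesis using lspan_add[of "mcol A V 2 v" col I "mcol A V 3 v"] e23 by simp
    qed
    have in2: "mcol A V 2 v \<in> lspan col I"
    proof (cases "k = 2 \<or> k' = 2")
      case True then show ?thesis using m1 by auto
    next
      case False
      then have "k = 1 \<and> k' = 3 \<or> k = 3 \<and> k' = 1" using k k' kk by auto
      then have "mcol A V 1 v \<in> lspan col I" "mcol A V 3 v \<in> lspan col I" using m1 by auto
      then show ?thesis using lspan_add[of "mcol A V 1 v" col I "mcol A V 3 v"] e13 by simp
    qed
    have "I \<inter> cls v = {}" using xy v by blast
    then have "\<not> (mcol A V 1 v \<in> lspan col I \<and> mcol A V 2 v \<in> lspan col I)" by (rule model_sh[OF Is v(1)])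
    then show False using in1 in2 by blast
  qed
qed

end


context model begin

lemma cls_in: "v \<in> V \<Longrightarrow> cls v \<in> \<Omega>" unfolding Oeq' by blast

lemma model_tightw_aux:
  assumes Ss: "S \<in> subtransversals U \<Omega>" and c: "card S = card \<Omega> - 1" and w: "\<omega> \<in> \<Omega>" and d: "\<omega> \<inter> S = {}"
  shows "\<exists>x\<in>\<omega>. col x \<in> lspan col S \<and> insert x S \<in> subtransversals U \<Omega>"
proof -
  obtain v where v: "v \<in> V" "\<omega> = cls v" using class_of w by blast
  have ma: "\<forall>\<omega>'\<in>\<Omega> - {\<omega>}. S \<inter> \<omega>' \<noteq> {}" using meets_all[OF finU part Ss c w d] .
  have all: "\<forall>w\<in>V - {v}. S \<inter> cls w \<noteq> {}"
  proof
    fix w assume w': "w \<in> V - {v}"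
    have "cls w \<noteq> cls v"
    proof
      assume "cls w = cls v"
      then have "u 1 w \<in> cls v" unfolding cls_def by auto
      moreover have "u 1 w \<in> cls w" unfolding cls_def by auto
      ultimately show False using cls_disj[of v w "u 1 w"] v w' by blast
    qed
    moreover have "cls w \<in> \<Omega>" using cls_in w' by blast
    ultimately have "cls w \<in> \<Omega> - {\<omega>}" using v(2) by blast
    then show "S \<inter> cls w \<noteq> {}" using ma by blast
  qed
  have d': "S \<inter> cls v = {}" using d v(2) by blast
  obtain x where x: "x \<in> cls v" "col x \<in> lspan col S" using model_tc[OF Ss v(1) d' all] by blast
  have xw: "x \<in> \<omega>" using x v by blast
  have d'': "S \<inter> \<omega> = {}" using d by blast
  have "insert x S \<in> subtransversals U \<Omega>" using subtrans_insert[OF finU part Ss w xw d''] .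
  then show ?thesis using x xw by blast
qed

lemma model_tightw: "tightw \<Omega> II"
  unfolding tightw_def
proof (intro ballI impI allI)
  fix S \<omega> assume S: "S \<in> II" and c: "card S = card \<Omega> - 1" and w: "\<omega> \<in> \<Omega>" and d: "\<omega> \<inter> S = {}"
  have Ss: "S \<in> subtransversals U \<Omega>" and Si: "gf2_indep col S" using S II_iff by auto
  have fS: "finite S" using finite_subset[OF subtrans_sub[OF Ss] finU] .
  obtain x where x: "x \<in> \<omega>" "col x \<in> lspan col S" using model_tightw_aux[OF Ss c w d] by blast
  have "x \<notin> S" using x d by blast
  then have "\<not> gf2_indep col (insert x S)" using indep_insert[OF fS _ Si] x by blast
  then show "\<exists>x\<in>\<omega>. insert x S \<notin> II" using x II_iff by blast
qed

lemma model_mmfam: "mmfam U \<Omega> II"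
  unfolding mmfam_def
proof (intro conjI ballI allI impI)
  show "II \<subseteq> subtransversals U \<Omega>" using II_iff by blast
  fix X Y assume X: "X \<in> II" and Y: "Y \<subseteq> X"
  have Xs: "X \<in> subtransversals U \<Omega>" and Xi: "gf2_indep col X" using X II_iff by auto
  have fX: "finite X" using finite_subset[OF subtrans_sub[OF Xs] finU] .
  show "Y \<in> II" using II_iff subtrans_subset[OF finU Xs Y] gf2_indep_subset[OF Xi Y fX] by blast
next
  show "ax2 \<Omega> II" by (rule model_ax2)
  show "tightw \<Omega> II" by (rule model_tightw)
qed

lemma model_tight: "tight U \<Omega> II"
  unfolding tight_def
proof (intro conjI ballI impI allI)
  show "nondegenerate \<Omega>" unfolding nondegenerate_def
  proof
    fix \<omega> assume "\<omega> \<in> \<Omega>"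
    then obtain v where "v \<in> V" "\<omega> = cls v" using class_of by blast
    then show "card \<omega> > 1" using cls_card by simp
  qed
  fix S \<omega> assume Ss: "S \<in> subtransversals U \<Omega>" and c: "card S = card \<Omega> - 1" and w: "\<omega> \<in> \<Omega>" and d: "\<omega> \<inter> S = {}"
  obtain x where x: "x \<in> \<omega>" "col x \<in> lspan col S" "insert x S \<in> subtransversals U \<Omega>"
    using model_tightw_aux[OF Ss c w d] by blast
  show "\<exists>x\<in>\<omega>. mm_rank II (insert x S) = mm_rank II S"
    using rank_span[OF finU Ss x(3) x(2) refl] x(1) by blast
qed

lemma model_sheltering: "sheltering U MM \<Omega>"
  unfolding sheltering_def
proof (intro conjI ballI impI)
  show "matroid U MM" by (rule column_matroid_matroid[OF finU])
  show "is_partition U \<Omega>" by (rule part)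
  fix I \<omega> x y assume I: "I \<in> MM \<inter> subtransversals U \<Omega>" and w: "\<omega> \<in> \<Omega>" and x: "x \<in> \<omega>" and y: "y \<in> \<omega>"
    and xy: "x \<noteq> y \<and> \<omega> \<inter> I = {}"
  have "I \<in> II" using I unfolding sheltered_indep_def by blast
  then have "insert x I \<in> II \<or> insert y I \<in> II" using model_ax2 w x y xy unfolding ax2_def by blast
  then show "insert x I \<in> MM \<or> insert y I \<in> MM" unfolding sheltered_indep_def by blast
qed

lemma model_strict: "matroid_rank MM \<le> card \<Omega>"
proof -
  have "MM \<subseteq> Pow U" unfolding column_matroid_def by blast
  then have fM: "finite MM" using finU finite_subset by blast
  have "{} \<in> MM" unfolding column_matroid_def by simp
  have "\<forall>X\<in>MM. card X \<le> card V"
  proof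
    fix X assume "X \<in> MM"
    then have X: "X \<subseteq> U" "gf2_indep col X" unfolding column_matroid_def by auto
    have fX: "finite X" using finite_subset[OF X(1) finU] .
    have sup: "\<forall>x\<in>X. \<forall>i. i \<notin> V \<longrightarrow> col x i = 0" using X(1) col_supp by blast
    show "card X \<le> card V" using indep_card_le_rows[OF finV fX X(2) sup] .
  qed
  then have "Max (card ` MM) \<le> card V" using fM \<open>{} \<in> MM\<close> by (intro Max.boundedI) auto
  then show ?thesis unfolding matroid_rank_def card_Omega .
qed

lemma model_binary: "binary_matroid U MM"
proof -
  define n where "n = Suc (Max (insert 0 V))"
  define col' where "col' = (\<lambda>x. if x \<in> U then col x else (\<lambda>_. (0::bit)))"
  have h1: "\<forall>x i. n \<le> i \<longrightarrow> col' x i = 0"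
  proof (intro allI impI)
    fix x i assume i: "n \<le> i"
    have "i \<notin> V"
    proof
      assume "i \<in> V"
      then have "i \<le> Max (insert 0 V)" using finV by simp
      then show False using i unfolding n_def by simp
    qed
    then show "col' x i = 0" unfolding col'_def using col_supp by auto
  qed
  have e: "gf2_indep col X \<longleftrightarrow> gf2_indep col' X" if "X \<subseteq> U" for X
    by (rule gf2_indep_cong) (use that in \<open>auto simp: col'_def\<close>)
  have h2: "MM = column_matroid U col'" unfolding column_matroid_def using e by blast
  show ?thesis unfolding binary_matroid_def using h1 h2 by blast
qed

end


lemma gf2_indep_reindex:
  assumes "inj_on h P"
  shows "gf2_indep col (h ` P) \<longleftrightarrow> gf2_indep (\<lambda>w. col (h w)) P"
proof
  assume a: "gf2_indep col (h ` P)"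
  show "gf2_indep (\<lambda>w. col (h w)) P" unfolding gf2_indep_alt
  proof (intro allI impI ballI)
    fix c w assume c: "lcomb (\<lambda>w. col (h w)) P c = (\<lambda>_. 0)" and w: "w \<in> P"
    have "lcomb col (h ` P) (\<lambda>x. c (inv_into P h x)) = lcomb (\<lambda>w. col (h w)) P c"
      unfolding lcomb_def
    proof (rule ext, rule sum.reindex_cong[OF assms refl])
      fix i w assume w: "w \<in> P"
      then show "c (inv_into P h (h w)) * col (h w) i = c w * col (h w) i"
        using inv_into_f_f[OF assms w] by simp
    qed
    then have z: "lcomb col (h ` P) (\<lambda>x. c (inv_into P h x)) = (\<lambda>_. 0)" using c by simp
    have "\<forall>x\<in>h ` P. c (inv_into P h x) = 0" using a z unfolding gf2_indep_alt by blast
    then have "c (inv_into P h (h w)) = 0" using w by blast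
    then show "c w = 0" using inv_into_f_f[OF assms w] by simp
  qed
next
  assume a: "gf2_indep (\<lambda>w. col (h w)) P"
  show "gf2_indep col (h ` P)" unfolding gf2_indep_alt
  proof (intro allI impI ballI)
    fix c x assume c: "lcomb col (h ` P) c = (\<lambda>_. 0)" and x: "x \<in> h ` P"
    have "lcomb col (h ` P) c = lcomb (\<lambda>w. col (h w)) P (\<lambda>w. c (h w))"
      unfolding lcomb_def by (rule ext, rule sum.reindex_cong[OF assms refl]) simp
    then have z: "lcomb (\<lambda>w. col (h w)) P (\<lambda>w. c (h w)) = (\<lambda>_. 0)" using c by simp
    have "\<forall>w\<in>P. c (h w) = 0" using a z unfolding gf2_indep_alt by blast
    then show "c x = 0" using x by blast
  qed
qed

lemma coord_indep:
  fixes col0 :: "'a \<Rightarrow> 'r \<Rightarrow> bit" and cc :: "'a \<Rightarrow> 'v \<Rightarrow> bit"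
  assumes fV: "finite V" and Ti: "gf2_indep Tc V" and fX: "finite X"
    and co: "\<forall>x\<in>X. col0 x = (\<lambda>r. \<Sum>i\<in>V. cc x i * Tc i r)"
    and sp: "\<forall>x\<in>X. \<forall>i. i \<notin> V \<longrightarrow> cc x i = 0"
  shows "gf2_indep col0 X \<longleftrightarrow> gf2_indep cc X"
proof -
  have key: "lcomb col0 X c = lcomb Tc V (lcomb cc X c)" for c
  proof
    fix r
    have "lcomb col0 X c r = (\<Sum>x\<in>X. c x * (\<Sum>i\<in>V. cc x i * Tc i r))"
      unfolding lcomb_def using co by (intro sum.cong) auto
    also have "\<dots> = (\<Sum>i\<in>V. (\<Sum>x\<in>X. c x * cc x i) * Tc i r)"
      by (simp add: sum_distrib_left sum_distrib_right mult.assoc) (rule sum.swap)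
    finally show "lcomb col0 X c r = lcomb Tc V (lcomb cc X c) r" unfolding lcomb_def .
  qed
  have eqz: "lcomb col0 X c = (\<lambda>_. 0) \<longleftrightarrow> lcomb cc X c = (\<lambda>_. 0)" for c
  proof
    assume "lcomb col0 X c = (\<lambda>_. 0)"
    then have "lcomb Tc V (lcomb cc X c) = (\<lambda>_. 0)" using key by simp
    then have inV: "\<forall>i\<in>V. lcomb cc X c i = 0" using Ti unfolding gf2_indep_alt by blast
    show "lcomb cc X c = (\<lambda>_. 0)"
    proof
      fix i show "lcomb cc X c i = 0"
      proof (cases "i \<in> V")
        case True then show ?thesis using inV by blast
      next
        case False then show ?thesis unfolding lcomb_def using sp by simp
      qed
    qed
  next
    assume "lcomb cc X c = (\<lambda>_. 0)"
    then have "lcomb col0 X c = lcomb Tc V (\<lambda>_. 0)" using key[of c] by simp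
    also have "\<dots> = (\<lambda>_. 0)" unfolding lcomb_def by simp
    finally show "lcomb col0 X c = (\<lambda>_. 0)" .
  qed
  show ?thesis unfolding gf2_indep_alt using eqz by simp
qed

lemma span_e:
  assumes fW: "finite W" and WV: "W \<subseteq> V" and f0: "\<forall>i. i \<notin> W \<longrightarrow> f i = 0"
  shows "f \<in> lspan (\<lambda>k. mcol A V 1 k) W"
proof -
  have "f = lcomb (\<lambda>k. mcol A V 1 k) W f"
  proof
    fix i
    have e: "\<And>k. f k * mcol A V 1 k i = (if k = i then (if i \<in> V then f i else 0) else 0)"
      unfolding mcol_def IAAI_col_def by auto
    have "lcomb (\<lambda>k. mcol A V 1 k) W f i = (if i \<in> W then (if i \<in> V then f i else 0) else 0)"
      unfolding lcomb_def e using fW by (simp add: sum.delta')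
    then show "f i = lcomb (\<lambda>k. mcol A V 1 k) W f i" using WV f0 by auto
  qed
  then show ?thesis unfolding lspan_def by blast
qed

lemma e_eval:
  assumes "i \<notin> W"
  shows "lcomb (\<lambda>k. mcol A V 1 k) W c i = 0"
proof -
  have h: "\<And>k. k \<in> W \<Longrightarrow> c k * mcol A V 1 k i = 0" using assms unfolding mcol_def IAAI_col_def by auto
  show ?thesis unfolding lcomb_def using h by (intro sum.neutral) blast
qed


locale cons =
  fixes U :: "'a set" and \<Omega> :: "'a set set" and \<I> :: "'a set set" and col0 :: "'a \<Rightarrow> nat \<Rightarrow> bit"
  assumes q: "q_matroid 3 U \<Omega> \<I>" and t: "tight U \<Omega> \<I>"
    and Ieq: "\<I> = sheltered_indep U (column_matroid U col0) \<Omega>"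
begin

lemma mm: "multimatroid U \<Omega> \<I>" using q unfolding q_matroid_def by blast
lemma card3: "\<forall>\<omega>\<in>\<Omega>. card \<omega> = 3" using q unfolding q_matroid_def by blast
lemma finU: "finite U" using mm unfolding multimatroid_def by blast
lemma part: "is_partition U \<Omega>" using mm unfolding multimatroid_def by blast
lemma fO: "finite \<Omega>" using part_finite[OF part finU] .
lemma I_iff: "X \<in> \<I> \<longleftrightarrow> X \<in> subtransversals U \<Omega> \<and> gf2_indep col0 X"
  unfolding Ieq sheltered_indep_def column_matroid_def using subtrans_sub by blast
lemma ax: "ax2 \<Omega> \<I>" using mm unfolding multimatroid_def ax2_def by blast
lemma sub: "\<I> \<subseteq> subtransversals U \<Omega>" using I_iff by blast
lemma her: "\<forall>X\<in>\<I>. \<forall>Y. Y \<subseteq> X \<longrightarrow> Y \<in> \<I>"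
proof (intro ballI allI impI)
  fix X Y assume X: "X \<in> \<I>" and Y: "Y \<subseteq> X"
  have Xs: "X \<in> subtransversals U \<Omega>" and Xi: "gf2_indep col0 X" using X I_iff by auto
  have fX: "finite X" using finite_subset[OF subtrans_sub[OF Xs] finU] .
  show "Y \<in> \<I>" using I_iff subtrans_subset[OF finU Xs Y] gf2_indep_subset[OF Xi Y fX] by blast
qed
lemma tw: "tightw \<Omega> \<I>" using tight_tightw[OF finU sub t her] .
lemma mmf: "mmfam U \<Omega> \<I>" unfolding mmfam_def using sub her ax tw by blast

lemma cls_two: "\<omega> \<in> \<Omega> \<Longrightarrow> \<exists>e1 e2. e1 \<in> \<omega> \<inter> U \<and> e2 \<in> \<omega> \<inter> U \<and> e1 \<noteq> e2"
proof -
  assume w: "\<omega> \<in> \<Omega>"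
  then have "card \<omega> = 3" using card3 by blast
  then obtain x y z where "\<omega> = {x,y,z}" "x \<noteq> y" unfolding card_3_iff by blast
  moreover have "\<omega> \<subseteq> U" using part_sub[OF part w] .
  ultimately show ?thesis by blast
qed

definition T0 :: "'a set" where "T0 = (SOME T. T \<in> \<I> \<and> (\<forall>\<omega>\<in>\<Omega>. T \<inter> \<omega> \<noteq> {}))"

lemma T0: "T0 \<in> \<I>" "\<forall>\<omega>\<in>\<Omega>. T0 \<inter> \<omega> \<noteq> {}"
proof -
  have e: "{} \<in> \<I>" using I_iff unfolding subtransversals_def by simp
  have two: "\<forall>\<omega>\<in>\<Omega>. \<exists>e1 e2. e1 \<in> \<omega> \<inter> U \<and> e2 \<in> \<omega> \<inter> U \<and> e1 \<noteq> e2" using cls_two by blast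
  have disj: "\<forall>\<omega>\<in>\<Omega>. \<omega> \<inter> {} = {}" by simp
  obtain S where "S \<in> \<I>" "\<forall>\<omega>\<in>\<Omega>. S \<inter> \<omega> \<noteq> {}"
    using extend[OF part finU sub ax fO subset_refl e disj two] by blast
  then have "\<exists>T. T \<in> \<I> \<and> (\<forall>\<omega>\<in>\<Omega>. T \<inter> \<omega> \<noteq> {})" by blast
  then have "T0 \<in> \<I> \<and> (\<forall>\<omega>\<in>\<Omega>. T0 \<inter> \<omega> \<noteq> {})" unfolding T0_def by (rule someI_ex)
  then show "T0 \<in> \<I>" "\<forall>\<omega>\<in>\<Omega>. T0 \<inter> \<omega> \<noteq> {}" by auto
qed

lemma T0s: "T0 \<in> subtransversals U \<Omega>" using T0 sub by blast
lemma T0U: "T0 \<subseteq> U" using subtrans_sub[OF T0s] .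

definition tf :: "'a set \<Rightarrow> 'a" where "tf \<omega> = (SOME x. x \<in> T0 \<inter> \<omega>)"

lemma tf: "\<omega> \<in> \<Omega> \<Longrightarrow> T0 \<inter> \<omega> = {tf \<omega>}"
proof -
  assume w: "\<omega> \<in> \<Omega>"
  have "\<exists>x. x \<in> T0 \<inter> \<omega>" using T0 w by blast
  then have tin: "tf \<omega> \<in> T0 \<inter> \<omega>" unfolding tf_def by (rule someI_ex)
  have "\<forall>y\<in>T0 \<inter> \<omega>. y = tf \<omega>" using subtrans_card_le1[OF finU T0s w] tin by blast
  then show ?thesis using tin by blast
qed

lemma cardT0: "card T0 = card \<Omega>"
proof -
  have "{\<omega>\<in>\<Omega>. T0 \<inter> \<omega> \<noteq> {}} = \<Omega>" using T0 by blast
  then show ?thesis using card_subtrans[OF finU part T0s] by simp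
qed

lemma S_props:
  assumes w: "\<omega> \<in> \<Omega>"
  shows "T0 - {tf \<omega>} \<in> \<I>" "card (T0 - {tf \<omega>}) = card \<Omega> - 1" "\<omega> \<inter> (T0 - {tf \<omega>}) = {}"
    "T0 - {tf \<omega>} \<in> subtransversals U \<Omega>" "insert (tf \<omega>) (T0 - {tf \<omega>}) = T0"
proof -
  show "T0 - {tf \<omega>} \<in> \<I>" using her T0(1) Diff_subset by blast
  then show "T0 - {tf \<omega>} \<in> subtransversals U \<Omega>" using sub by blast
  have "tf \<omega> \<in> T0" using tf[OF w] by blast
  moreover have "finite T0" using finite_subset[OF T0U finU] .
  ultimately show "card (T0 - {tf \<omega>}) = card \<Omega> - 1" using cardT0 by simp
  show "\<omega> \<inter> (T0 - {tf \<omega>}) = {}" using tf[OF w] by blast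
  show "insert (tf \<omega>) (T0 - {tf \<omega>}) = T0" using \<open>tf \<omega> \<in> T0\<close> by blast
qed

definition af :: "'a set \<Rightarrow> 'a" where "af \<omega> = (SOME x. x \<in> \<omega> \<and> insert x (T0 - {tf \<omega>}) \<notin> \<I>)"

lemma af: assumes w: "\<omega> \<in> \<Omega>"
  shows "af \<omega> \<in> \<omega>" "insert (af \<omega>) (T0 - {tf \<omega>}) \<notin> \<I>" "af \<omega> \<noteq> tf \<omega>"
proof -
  have tw': "\<forall>S\<in>\<I>. card S = card \<Omega> - 1 \<longrightarrow> (\<forall>\<omega>\<in>\<Omega>. \<omega> \<inter> S = {} \<longrightarrow> (\<exists>x\<in>\<omega>. insert x S \<notin> \<I>))"
    using tw unfolding tightw_def .
  have "\<exists>x\<in>\<omega>. insert x (T0 - {tf \<omega>}) \<notin> \<I>"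
    using tw'[rule_format, OF S_props(1)[OF w] S_props(2)[OF w] w S_props(3)[OF w]] .
  then have "\<exists>x. x \<in> \<omega> \<and> insert x (T0 - {tf \<omega>}) \<notin> \<I>" by blast
  then have a: "af \<omega> \<in> \<omega> \<and> insert (af \<omega>) (T0 - {tf \<omega>}) \<notin> \<I>" unfolding af_def by (rule someI_ex)
  then show "af \<omega> \<in> \<omega>" "insert (af \<omega>) (T0 - {tf \<omega>}) \<notin> \<I>" by auto
  show "af \<omega> \<noteq> tf \<omega>"
  proof
    assume "af \<omega> = tf \<omega>"
    then have "insert (af \<omega>) (T0 - {tf \<omega>}) = T0" using S_props(5)[OF w] by simp
    then show False using a T0(1) by simp
  qed
qed

definition bf :: "'a set \<Rightarrow> 'a" where "bf \<omega> = (SOME x. x \<in> \<omega> \<and> x \<noteq> tf \<omega> \<and> x \<noteq> af \<omega>)"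

lemma bf: assumes w: "\<omega> \<in> \<Omega>"
  shows "bf \<omega> \<in> \<omega>" "bf \<omega> \<noteq> tf \<omega>" "bf \<omega> \<noteq> af \<omega>" "\<omega> = {tf \<omega>, af \<omega>, bf \<omega>}"
proof -
  have c: "card \<omega> = 3" using card3 w by blast
  have fw: "finite \<omega>" using finite_subset[OF part_sub[OF part w] finU] .
  have ta: "tf \<omega> \<in> \<omega>" "af \<omega> \<in> \<omega>" "af \<omega> \<noteq> tf \<omega>" using tf[OF w] af[OF w] by auto
  have "\<exists>x. x \<in> \<omega> \<and> x \<noteq> tf \<omega> \<and> x \<noteq> af \<omega>"
  proof (rule ccontr)
    assume "\<not> ?thesis"
    then have "\<omega> \<subseteq> {tf \<omega>, af \<omega>}" by blast
    then have "card \<omega> \<le> card {tf \<omega>, af \<omega>}" by (intro card_mono) auto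
    also have "card {tf \<omega>, af \<omega>} \<le> 2" by (cases "tf \<omega> = af \<omega>") auto
    finally have "card \<omega> \<le> 2" .
    then show False using c by simp
  qed
  then have b: "bf \<omega> \<in> \<omega> \<and> bf \<omega> \<noteq> tf \<omega> \<and> bf \<omega> \<noteq> af \<omega>" unfolding bf_def by (rule someI_ex)
  then show "bf \<omega> \<in> \<omega>" "bf \<omega> \<noteq> tf \<omega>" "bf \<omega> \<noteq> af \<omega>" by auto
  have sub: "{tf \<omega>, af \<omega>, bf \<omega>} \<subseteq> \<omega>" using ta b by blast
  have "card {tf \<omega>, af \<omega>, bf \<omega>} = 3" using ta b by auto
  then show "\<omega> = {tf \<omega>, af \<omega>, bf \<omega>}" using card_subset_eq[OF fw sub] c by simp
qed

end


context cons begin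

definition V :: "nat set" where "V = {0..<card \<Omega>}"
definition h :: "nat \<Rightarrow> 'a set" where "h = (SOME h. bij_betw h V \<Omega>)"

lemma finV: "finite V" unfolding V_def by simp

lemma hbij: "bij_betw h V \<Omega>"
proof -
  have "\<exists>h. bij_betw h V \<Omega>" unfolding V_def using ex_bij_betw_nat_finite[OF fO] .
  then show ?thesis unfolding h_def by (rule someI_ex)
qed

lemma hO: "i \<in> V \<Longrightarrow> h i \<in> \<Omega>" using hbij bij_betwE by blast
lemma h_inj: "i \<in> V \<Longrightarrow> j \<in> V \<Longrightarrow> h i = h j \<Longrightarrow> i = j"
  using hbij unfolding bij_betw_def inj_on_def by blast
lemma h_surj: "\<omega> \<in> \<Omega> \<Longrightarrow> \<exists>i\<in>V. \<omega> = h i"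
  using hbij unfolding bij_betw_def by blast
lemma cardV: "card V = card \<Omega>" unfolding V_def by simp

definition tt :: "nat \<Rightarrow> 'a" where "tt i = tf (h i)"
definition aa :: "nat \<Rightarrow> 'a" where "aa i = af (h i)"
definition bb :: "nat \<Rightarrow> 'a" where "bb i = bf (h i)"

lemma hi: assumes "i \<in> V"
  shows "h i = {tt i, aa i, bb i}" "tt i \<noteq> aa i" "tt i \<noteq> bb i" "aa i \<noteq> bb i"
    "tt i \<in> h i" "aa i \<in> h i" "bb i \<in> h i"
  using bf[OF hO[OF assms]] af[OF hO[OF assms]] unfolding tt_def aa_def bb_def by auto

lemma same_cls: "i \<in> V \<Longrightarrow> j \<in> V \<Longrightarrow> x \<in> h i \<Longrightarrow> x \<in> h j \<Longrightarrow> i = j"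
  using part_unique[OF part hO hO] h_inj by metis

lemma hU: "i \<in> V \<Longrightarrow> h i \<subseteq> U" using part_sub[OF part hO] .

lemma U_cases: "x \<in> U \<Longrightarrow> \<exists>i\<in>V. x = tt i \<or> x = aa i \<or> x = bb i"
proof -
  assume "x \<in> U"
  then obtain \<omega> where "\<omega> \<in> \<Omega>" "x \<in> \<omega>" using part_ex[OF part] by blast
  then obtain i where "i \<in> V" "x \<in> h i" using h_surj by blast
  then show ?thesis using hi by blast
qed

lemma T0tt: "i \<in> V \<Longrightarrow> T0 \<inter> h i = {tt i}" using tf[OF hO] unfolding tt_def .

lemma T0eq: "T0 = tt ` V"
proof
  show "T0 \<subseteq> tt ` V"
  proof
    fix x assume x: "x \<in> T0"
    then obtain i where i: "i \<in> V" "x = tt i \<or> x = aa i \<or> x = bb i" using U_cases T0U by blast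
    then have "x \<in> h i" using hi by blast
    then have "x = tt i" using T0tt[OF i(1)] x by blast
    then show "x \<in> tt ` V" using i by blast
  qed
  show "tt ` V \<subseteq> T0" using T0tt by blast
qed

lemma tt_inj: "inj_on tt V"
proof
  fix i j assume "i \<in> V" "j \<in> V" "tt i = tt j"
  then show "i = j" using same_cls[of i j "tt i"] hi by metis
qed

definition Tc :: "nat \<Rightarrow> nat \<Rightarrow> bit" where "Tc i = col0 (tt i)"

lemma Tc_indep: "gf2_indep Tc V"
proof -
  have "gf2_indep col0 (tt ` V)" using T0(1) I_iff T0eq by simp
  then show ?thesis unfolding Tc_def using gf2_indep_reindex[OF tt_inj] by blast
qed

lemma T0_minus: "j \<in> V \<Longrightarrow> T0 - {tt j} = tt ` (V - {j})"
  unfolding T0eq using tt_inj by (auto simp: inj_on_def)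

lemma aa_span: assumes j: "j \<in> V" shows "col0 (aa j) \<in> lspan Tc (V - {j})"
proof -
  let ?S = "T0 - {tt j}"
  have w: "h j \<in> \<Omega>" using hO[OF j] .
  have S: "?S \<in> \<I>" "?S \<in> subtransversals U \<Omega>" "h j \<inter> ?S = {}"
    using S_props[OF w] unfolding tt_def by auto
  have n: "insert (aa j) ?S \<notin> \<I>" using af(2)[OF w] unfolding tt_def aa_def .
  have d: "?S \<inter> h j = {}" using S(3) by blast
  have "insert (aa j) ?S \<in> subtransversals U \<Omega>" using subtrans_insert[OF finU part S(2) w hi(6)[OF j] d] .
  then have ni: "\<not> gf2_indep col0 (insert (aa j) ?S)" using n I_iff by blast
  have Si: "gf2_indep col0 ?S" using S(1) I_iff by blast
  have fS: "finite ?S" using finite_subset[OF subtrans_sub[OF S(2)] finU] .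
  have anS: "aa j \<notin> ?S" using d hi(6)[OF j] by blast
  have "col0 (aa j) \<in> lspan col0 ?S" using indep_insert[OF fS anS Si] ni by blast
  also have "lspan col0 ?S = lspan Tc (V - {j})"
    unfolding T0_minus[OF j] Tc_def by (rule lspan_reindex) (use inj_on_subset[OF tt_inj, of "V - {j}"] in \<open>auto simp: Tc_def\<close>)
  finally show ?thesis .
qed

definition cf :: "nat \<Rightarrow> nat \<Rightarrow> bit" where "cf j = (SOME c. col0 (aa j) = lcomb Tc (V - {j}) c)"
definition A :: "nat \<Rightarrow> nat \<Rightarrow> bit" where "A i j = (if i \<in> V \<and> j \<in> V \<and> i \<noteq> j then cf j i else 0)"

lemma aa_coord: assumes j: "j \<in> V" shows "col0 (aa j) = (\<lambda>r. \<Sum>i\<in>V. A i j * Tc i r)"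
proof -
  have "\<exists>c. col0 (aa j) = lcomb Tc (V - {j}) c" using aa_span[OF j] unfolding lspan_def by blast
  then have "col0 (aa j) = lcomb Tc (V - {j}) (cf j)" unfolding cf_def by (rule someI_ex)
  also have "\<dots> = lcomb Tc V (\<lambda>x. if x \<in> V - {j} then cf j x else 0)"
    by (rule lcomb_subset[OF finV]) blast
  also have "\<dots> = lcomb Tc V (\<lambda>i. A i j)"
    by (rule lcomb_cong) (use j in \<open>auto simp: A_def\<close>)
  finally show ?thesis unfolding lcomb_def .
qed

lemma A_diag: "A j j = 0" unfolding A_def by simp

definition vtx :: "'a \<Rightarrow> nat" where "vtx x = (SOME i. i \<in> V \<and> x \<in> h i)"
lemma vtx: "i \<in> V \<Longrightarrow> x \<in> h i \<Longrightarrow> vtx x = i"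
proof -
  assume a: "i \<in> V" "x \<in> h i"
  then have "\<exists>i. i \<in> V \<and> x \<in> h i" by blast
  then have "vtx x \<in> V \<and> x \<in> h (vtx x)" unfolding vtx_def by (rule someI_ex)
  then show ?thesis using same_cls a by blast
qed

definition ktp :: "'a \<Rightarrow> nat" where "ktp x = (if x = tt (vtx x) then 1 else if x = aa (vtx x) then 2 else 3)"
definition uu :: "nat \<Rightarrow> nat \<Rightarrow> 'a" where "uu k i = (if k = 1 then tt i else if k = 2 then aa i else bb i)"
definition colp :: "'a \<Rightarrow> nat \<Rightarrow> bit" where "colp x = (if x \<in> U then mcol A V (ktp x) (vtx x) else (\<lambda>_. 0))"

lemma uu_in: "k \<in> {1,2,3} \<Longrightarrow> v \<in> V \<Longrightarrow> uu k v \<in> h v"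
  unfolding uu_def using hi by auto

lemma colp_u: assumes k: "k \<in> {1,2,3}" and v: "v \<in> V" shows "colp (uu k v) = mcol A V k v"
proof -
  have inh: "uu k v \<in> h v" using uu_in[OF k v] .
  then have U: "uu k v \<in> U" using hU[OF v] by blast
  have vv: "vtx (uu k v) = v" using vtx[OF v inh] .
  have kt: "ktp (uu k v) = (if uu k v = tt v then 1 else if uu k v = aa v then 2 else 3)"
    unfolding ktp_def vv ..
  have "ktp (uu k v) = k" unfolding kt using k hi[OF v] by (auto simp: uu_def)
  then show ?thesis unfolding colp_def using U vv by simp
qed

lemma colp_supp: "i \<notin> V \<Longrightarrow> colp x i = 0"
  unfolding colp_def mcol_def by simp

lemma tt_uu: "tt i = uu 1 i" and aa_uu: "aa i = uu 2 i" and bb_uu: "bb i = uu 3 i"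
  unfolding uu_def by auto

lemma coord: assumes x: "x \<in> T0 \<union> aa ` V" shows "col0 x = (\<lambda>r. \<Sum>i\<in>V. colp x i * Tc i r)"
proof -
  consider (t) k where "k \<in> V" "x = tt k" | (a) j where "j \<in> V" "x = aa j" using x T0eq by blast
  then show ?thesis
  proof cases
    case t
    have c: "colp x = mcol A V 1 k" using colp_u[of 1 k] t tt_uu by simp
    have "\<And>r. (\<Sum>i\<in>V. colp x i * Tc i r) = Tc k r"
    proof -
      fix r
      have "(\<Sum>i\<in>V. colp x i * Tc i r) = (\<Sum>i\<in>V. (if i = k then 1 else 0) * Tc i r)"
        unfolding c mcol_def IAAI_col_def by (intro sum.cong) auto
      also have "\<dots> = Tc k r" using sum_ind[OF finV t(1)] .
      finally show "(\<Sum>i\<in>V. colp x i * Tc i r) = Tc k r" .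
    qed
    then show ?thesis unfolding t(2) Tc_def by (simp add: t(2)[symmetric])
  next
    case a
    have c: "colp x = mcol A V 2 j" using colp_u[of 2 j] a aa_uu by simp
    have "(\<lambda>r. \<Sum>i\<in>V. colp x i * Tc i r) = (\<lambda>r. \<Sum>i\<in>V. A i j * Tc i r)"
      unfolding c mcol_def IAAI_col_def by (intro ext sum.cong) auto
    then show ?thesis using aa_coord[OF a(1)] a(2) by simp
  qed
qed

lemma I_coord:
  assumes Xs: "X \<in> subtransversals U \<Omega>" and XT: "X \<subseteq> T0 \<union> aa ` V"
  shows "X \<in> \<I> \<longleftrightarrow> gf2_indep colp X"
proof -
  have fX: "finite X" using finite_subset[OF subtrans_sub[OF Xs] finU] .
  have co: "\<forall>x\<in>X. col0 x = (\<lambda>r. \<Sum>i\<in>V. colp x i * Tc i r)" using coord XT by blast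
  have sp: "\<forall>x\<in>X. \<forall>i. i \<notin> V \<longrightarrow> colp x i = 0" using colp_supp by blast
  show ?thesis using I_iff Xs coord_indep[OF finV Tc_indep fX co sp] by blast
qed

end


context cons begin

lemma tt_in_T0: "k \<in> V \<Longrightarrow> tt k \<in> T0" using T0eq by blast

lemma colp_tt: "k \<in> V \<Longrightarrow> colp (tt k) = mcol A V 1 k" using colp_u[of 1 k] tt_uu by simp
lemma colp_aa: "k \<in> V \<Longrightarrow> colp (aa k) = mcol A V 2 k" using colp_u[of 2 k] aa_uu by simp

lemma tt_ne_aa: "j \<in> V \<Longrightarrow> k \<in> V \<Longrightarrow> aa j \<noteq> tt k"
proof
  assume a: "j \<in> V" "k \<in> V" "aa j = tt k"
  then have "k = j" using same_cls[of k j "tt k"] hi by metis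
  then show False using a hi(2)[OF a(1)] by simp
qed

lemma lspan_tt: "P \<subseteq> V \<Longrightarrow> lspan colp (tt ` P) = lspan (\<lambda>k. mcol A V 1 k) P"
  by (rule lspan_reindex) (auto intro: inj_on_subset[OF tt_inj] simp: colp_tt)

lemma indep_tt: "P \<subseteq> V \<Longrightarrow> gf2_indep colp (tt ` P)"
proof -
  assume P: "P \<subseteq> V"
  have s: "tt ` P \<subseteq> T0" using P tt_in_T0 by blast
  then have "tt ` P \<in> \<I>" using her T0(1) by blast
  moreover have "tt ` P \<in> subtransversals U \<Omega>" using subtrans_subset[OF finU T0s s] .
  ultimately show ?thesis using I_coord s by blast
qed

lemma sym_aux:
  assumes i: "i \<in> V" and j: "j \<in> V" and ij: "i \<noteq> j" and A1: "A i j = 1" and A0: "A j i = 0"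
  shows False
proof -
  define P where "P = V - {i, j}"
  define R where "R = tt ` P"
  have PV: "P \<subseteq> V" unfolding P_def by blast
  have fP: "finite P" using finV PV finite_subset by blast
  have fR: "finite R" unfolding R_def using fP by simp
  have RT: "R \<subseteq> T0" unfolding R_def using PV tt_in_T0 by blast
  have Rs: "R \<in> subtransversals U \<Omega>" using subtrans_subset[OF finU T0s RT] .
  have Ri: "gf2_indep colp R" unfolding R_def using indep_tt[OF PV] .
  have Rhi: "R \<inter> h i = {}" and Rhj: "R \<inter> h j = {}"
  proof -
    show "R \<inter> h i = {}"
    proof (rule ccontr)
      assume "R \<inter> h i \<noteq> {}"
      then obtain k where k: "k \<in> P" "tt k \<in> h i" unfolding R_def by blast
      then have "k = i" using same_cls[of k i "tt k"] hi PV i by blast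
      then show False using k unfolding P_def by blast
    qed
    show "R \<inter> h j = {}"
    proof (rule ccontr)
      assume "R \<inter> h j \<noteq> {}"
      then obtain k where k: "k \<in> P" "tt k \<in> h j" unfolding R_def by blast
      then have "k = j" using same_cls[of k j "tt k"] hi PV j by blast
      then show False using k unfolding P_def by blast
    qed
  qed
  have ajR: "aa j \<notin> R" using Rhj hi(6)[OF j] by blast
  have aiR: "aa i \<notin> R" using Rhi hi(6)[OF i] by blast
  define X1 where "X1 = insert (aa j) R"
  have X1s: "X1 \<in> subtransversals U \<Omega>" unfolding X1_def
    using subtrans_insert[OF finU part Rs hO[OF j] hi(6)[OF j] Rhj] .
  have X1T: "X1 \<subseteq> T0 \<union> aa ` V" unfolding X1_def using RT j by blast
  have hiX1: "h i \<inter> X1 = {}"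
  proof -
    have "aa j \<notin> h i" using same_cls[of i j "aa j"] hi(6)[OF j] i j ij by blast
    then show ?thesis unfolding X1_def using Rhi by blast
  qed
  have X1I: "X1 \<in> \<I>"
  proof -
    have "colp (aa j) \<notin> lspan colp R"
    proof
      assume "colp (aa j) \<in> lspan colp R"
      then have "mcol A V 2 j \<in> lspan (\<lambda>k. mcol A V 1 k) P" using lspan_tt[OF PV] colp_aa[OF j] unfolding R_def by simp
      then obtain c where c: "mcol A V 2 j = lcomb (\<lambda>k. mcol A V 1 k) P c" unfolding lspan_def by blast
      have "i \<notin> P" unfolding P_def by blast
      then have "mcol A V 2 j i = 0" using c e_eval by metis
      moreover have "mcol A V 2 j i = 1" using i A1 unfolding mcol_def IAAI_col_def by simp
      ultimately show False by simp
    qed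
    then have "gf2_indep colp X1" unfolding X1_def using indep_insert[OF fR ajR Ri] by blast
    then show ?thesis using I_coord[OF X1s X1T] by blast
  qed
  have fX1: "finite X1" unfolding X1_def using fR by simp
  have X2n: "insert (tt i) X1 \<notin> \<I>"
  proof -
    have X2s: "insert (tt i) X1 \<in> subtransversals U \<Omega>"
      using subtrans_insert[OF finU part X1s hO[OF i] hi(5)[OF i]] hiX1 by blast
    have X2T: "insert (tt i) X1 \<subseteq> T0 \<union> aa ` V" using X1T tt_in_T0[OF i] by blast
    have eq: "insert (tt i) X1 = insert (aa j) (tt ` (V - {j}))"
      unfolding X1_def R_def P_def using i ij by blast
    have Vj: "V - {j} \<subseteq> V" by blast
    have fVj: "finite (V - {j})" using finV by simp
    have "mcol A V 2 j \<in> lspan (\<lambda>k. mcol A V 1 k) (V - {j})"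
      by (rule span_e[OF fVj Vj]) (auto simp: mcol_def IAAI_col_def A_def)
    then have sp: "colp (aa j) \<in> lspan colp (tt ` (V - {j}))" using lspan_tt[OF Vj] colp_aa[OF j] by simp
    have nin: "aa j \<notin> tt ` (V - {j})" using tt_ne_aa j by blast
    have "\<not> gf2_indep colp (insert (aa j) (tt ` (V - {j})))"
      using indep_insert[OF _ nin indep_tt[OF Vj]] sp fVj by blast
    then show ?thesis using I_coord[OF X2s X2T] eq by simp
  qed
  have X3n: "insert (aa i) X1 \<notin> \<I>"
  proof -
    have X3s: "insert (aa i) X1 \<in> subtransversals U \<Omega>"
      using subtrans_insert[OF finU part X1s hO[OF i] hi(6)[OF i]] hiX1 by blast
    have X3T: "insert (aa i) X1 \<subseteq> T0 \<union> aa ` V" using X1T i by blast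
    have "mcol A V 2 i \<in> lspan (\<lambda>k. mcol A V 1 k) P"
      by (rule span_e[OF fP PV]) (use A0 in \<open>auto simp: mcol_def IAAI_col_def A_def P_def\<close>)
    then have sp: "colp (aa i) \<in> lspan colp R" using lspan_tt[OF PV] colp_aa[OF i] unfolding R_def by simp
    have nd: "\<not> gf2_indep colp (insert (aa i) R)" using indep_insert[OF fR aiR Ri] sp by blast
    have "insert (aa i) R \<subseteq> insert (aa i) X1" unfolding X1_def by blast
    then have "\<not> gf2_indep colp (insert (aa i) X1)" using nd gf2_indep_subset fX1 by blast
    then show ?thesis using I_coord[OF X3s X3T] by blast
  qed
  have "insert (tt i) X1 \<in> \<I> \<or> insert (aa i) X1 \<in> \<I>"
    using ax X1I hO[OF i] hi(5,6)[OF i] hi(2)[OF i] hiX1 unfolding ax2_def by blast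
  then show False using X2n X3n by blast
qed

lemma A_sym: "symm A V"
  unfolding symm_def
proof (intro ballI)
  fix v w assume v: "v \<in> V" and w: "w \<in> V"
  show "A v w = A w v"
  proof (rule ccontr)
    assume ne: "A v w \<noteq> A w v"
    then have vw: "v \<noteq> w" by blast
    have "A v w = 1 \<and> A w v = 0 \<or> A v w = 0 \<and> A w v = 1" using ne bit_cases2[of "A v w"] bit_cases2[of "A w v"] by auto
    then show False using sym_aux[OF v w vw] sym_aux[OF w v] vw by auto
  qed
qed

end


context cons begin

lemma uu_eq: assumes "k \<in> {1,2,3}" "k' \<in> {1,2,3}" "v \<in> V" "v' \<in> V" "uu k v = uu k' v'"
  shows "k = k' \<and> v = v'"
proof -
  have "v = v'" using same_cls[of v v' "uu k v"] uu_in assms by metis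
  then show ?thesis using assms hi[OF assms(3)] unfolding uu_def by auto
qed

lemma model_inst: "model U \<Omega> V A uu colp"
proof
  show "finite V" by (rule finV)
  show "symm A V" by (rule A_sym)
  show "inj_on (\<lambda>(k, v). uu k v) ({1,2,3} \<times> V)"
  proof (rule inj_onI)
    fix p q assume p: "p \<in> {1,2,3} \<times> V" and q: "q \<in> {1,2,3} \<times> V"
      and e: "(\<lambda>(k, v). uu k v) p = (\<lambda>(k, v). uu k v) q"
    obtain k v where kv: "p = (k, v)" "k \<in> {1,2,3}" "v \<in> V" using p by blast
    obtain k' v' where kv': "q = (k', v')" "k' \<in> {1,2,3}" "v' \<in> V" using q by blast
    have "uu k v = uu k' v'" using e kv(1) kv'(1) by simp
    then have "k = k' \<and> v = v'" using uu_eq[OF kv(2) kv'(2) kv(3) kv'(3)] by blast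
    then show "p = q" using kv(1) kv'(1) by simp
  qed
  show "U = (\<lambda>(k, v). uu k v) ` ({1,2,3} \<times> V)"
  proof
    show "U \<subseteq> (\<lambda>(k, v). uu k v) ` ({1,2,3} \<times> V)"
    proof
      fix x assume "x \<in> U"
      then obtain i where i: "i \<in> V" "x = tt i \<or> x = aa i \<or> x = bb i" using U_cases by blast
      then obtain k where k: "k \<in> {1,2,3}" "x = uu k i"
      proof (elim disjE)
        assume "x = tt i" "\<And>k. k \<in> {1, 2, 3} \<Longrightarrow> x = uu k i \<Longrightarrow> thesis"
        then show thesis using tt_uu by blast
      next
        assume "x = aa i" "\<And>k. k \<in> {1, 2, 3} \<Longrightarrow> x = uu k i \<Longrightarrow> thesis"
        then show thesis using aa_uu by blast
      next
        assume "x = bb i" "\<And>k. k \<in> {1, 2, 3} \<Longrightarrow> x = uu k i \<Longrightarrow> thesis"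
        then show thesis using bb_uu by blast
      qed
      have "(k, i) \<in> {1,2,3} \<times> V" using k(1) i(1) by blast
      then show "x \<in> (\<lambda>(k, v). uu k v) ` ({1,2,3} \<times> V)" using k(2) by (intro rev_image_eqI[of "(k,i)"]) auto
    qed
    show "(\<lambda>(k, v). uu k v) ` ({1,2,3} \<times> V) \<subseteq> U"
    proof
      fix x assume "x \<in> (\<lambda>(k, v). uu k v) ` ({1,2,3} \<times> V)"
      then obtain p where p: "p \<in> {1,2,3} \<times> V" "x = (\<lambda>(k, v). uu k v) p" by (rule imageE)
      obtain k v where kv0: "p = (k, v)" by (cases p)
      have kv: "k \<in> {1,2,3}" "v \<in> V" "x = uu k v" using p kv0 by auto
      then show "x \<in> U" using uu_in[OF kv(1,2)] hU[OF kv(2)] by blast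
    qed
  qed
  show "\<Omega> = {{uu 1 v, uu 2 v, uu 3 v} | v. v \<in> V}"
  proof -
    have "\<Omega> = h ` V" using hbij unfolding bij_betw_def by simp
    also have "\<dots> = (\<lambda>v. {uu 1 v, uu 2 v, uu 3 v}) ` V"
      by (rule image_cong) (auto simp: hi(1) uu_def)
    also have "\<dots> = {{uu 1 v, uu 2 v, uu 3 v} | v. v \<in> V}" by blast
    finally show ?thesis .
  qed
  show "\<forall>k\<in>{1,2,3}. \<forall>v\<in>V. colp (uu k v) = mcol A V k v" using colp_u by blast
qed

lemma I_eq: "\<I> = sheltered_indep U (column_matroid U colp) \<Omega>"
proof -
  define B where "B = bb ` V"
  have Bp: "\<forall>\<omega>\<in>\<Omega>. card (B \<inter> \<omega>) = 1"
  proof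
    fix \<omega> assume "\<omega> \<in> \<Omega>"
    then obtain i where i: "i \<in> V" "\<omega> = h i" using h_surj by blast
    have "B \<inter> h i = {bb i}"
    proof
      show "B \<inter> h i \<subseteq> {bb i}"
      proof
        fix x assume "x \<in> B \<inter> h i"
        then obtain k where k: "k \<in> V" "x = bb k" "bb k \<in> h i" unfolding B_def by blast
        then have "k = i" using same_cls[of k i "bb k"] hi(7) i(1) by blast
        then show "x \<in> {bb i}" using k by simp
      qed
      show "{bb i} \<subseteq> B \<inter> h i" using i hi(7)[OF i(1)] unfolding B_def by blast
    qed
    then show "card (B \<inter> \<omega>) = 1" using i by simp
  qed
  have base: "\<forall>Z\<in>subtransversals U \<Omega>. Z \<inter> B = {} \<longrightarrow>
      (Z \<in> \<I> \<longleftrightarrow> Z \<in> sheltered_indep U (column_matroid U colp) \<Omega>)"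
  proof (intro ballI impI)
    fix Z assume Zs: "Z \<in> subtransversals U \<Omega>" and ZB: "Z \<inter> B = {}"
    have ZT: "Z \<subseteq> T0 \<union> aa ` V"
    proof
      fix z assume z: "z \<in> Z"
      then have "z \<in> U" using subtrans_sub[OF Zs] by blast
      then obtain i where i: "i \<in> V" "z = tt i \<or> z = aa i \<or> z = bb i" using U_cases by blast
      have "z \<noteq> bb i" using z ZB i(1) unfolding B_def by blast
      then show "z \<in> T0 \<union> aa ` V" using i tt_in_T0 by blast
    qed
    show "Z \<in> \<I> \<longleftrightarrow> Z \<in> sheltered_indep U (column_matroid U colp) \<Omega>"
      using I_coord[OF Zs ZT] model.II_iff[OF model_inst] Zs by blast
  qed
  show ?thesis
    using agree[OF part finU card3 Bp mmf model.model_mmfam[OF model_inst] base] .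
qed

lemma IAAI: "IAAI_sheltered U \<Omega> \<I>"
  unfolding IAAI_sheltered_def
proof (intro exI conjI)
  show "sheltering U (column_matroid U colp) \<Omega>" using model.model_sheltering[OF model_inst] .
  show "\<I> = sheltered_indep U (column_matroid U colp) \<Omega>" by (rule I_eq)
  show "finite V" by (rule finV)
  show "\<forall>v\<in>V. \<forall>w\<in>V. A v w = A w v" using A_sym unfolding symm_def .
  show "inj_on (\<lambda>(k, v). uu k v) ({1,2,3} \<times> V)" using model.inj[OF model_inst] .
  show "U = (\<lambda>(k, v). uu k v) ` ({1,2,3} \<times> V)" using model.Ueq[OF model_inst] .
  show "\<Omega> = {{uu 1 v, uu 2 v, uu 3 v} | v. v \<in> V}" using model.Oeq[OF model_inst] .
  show "\<forall>k\<in>{1,2,3}. \<forall>v\<in>V. \<forall>w\<in>V. colp (uu k v) w = IAAI_col A k v w"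
    using colp_u unfolding mcol_def by simp
  show "\<forall>x\<in>U. \<forall>w. w \<notin> V \<longrightarrow> colp x w = 0" using colp_supp by blast
  show "column_matroid U colp = column_matroid U colp" ..
qed

end


lemma strict_imp_binary: "strictly_binary_mm U \<Omega> \<I> \<Longrightarrow> binary_mm U \<Omega> \<I>"
  unfolding strictly_binary_mm_def binary_mm_def strict_sheltering_def by blast

lemma IAAI_imp:
  fixes U :: "'a set"
  assumes "IAAI_sheltered U \<Omega> \<I>"
  shows "tight U \<Omega> \<I> \<and> strictly_binary_mm U \<Omega> \<I>"
proof -
  obtain M and V :: "nat set" and A :: "nat \<Rightarrow> nat \<Rightarrow> bit" and u :: "nat \<Rightarrow> nat \<Rightarrow> 'a"
    and col :: "'a \<Rightarrow> nat \<Rightarrow> bit" where sh: "sheltering U M \<Omega>" and Ie: "\<I> = sheltered_indep U M \<Omega>"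
    and fV: "finite V" and sy: "\<forall>v\<in>V. \<forall>w\<in>V. A v w = A w v"
    and inj: "inj_on (\<lambda>(k, v). u k v) ({1,2,3} \<times> V)"
    and Ue: "U = (\<lambda>(k, v). u k v) ` ({1,2,3} \<times> V)"
    and Oe: "\<Omega> = {{u 1 v, u 2 v, u 3 v} | v. v \<in> V}"
    and cp: "\<forall>k\<in>{1,2,3}. \<forall>v\<in>V. \<forall>w\<in>V. col (u k v) w = IAAI_col A k v w"
    and su: "\<forall>x\<in>U. \<forall>w. w \<notin> V \<longrightarrow> col x w = 0"
    and Me: "M = column_matroid U col"
    using assms unfolding IAAI_sheltered_def by (elim exE conjE) (rule that, assumption+)
  have colu: "\<forall>k\<in>{1,2,3}. \<forall>v\<in>V. col (u k v) = mcol A V k v"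
  proof (intro ballI ext)
    fix k v w :: nat assume k: "k \<in> {1,2,3}" and v: "v \<in> V"
    have uU: "u k v \<in> U" unfolding Ue using k v by (intro rev_image_eqI[of "(k,v)"]) auto
    show "col (u k v) w = mcol A V k v w"
    proof (cases "w \<in> V")
      case True
      have "col (u k v) w = IAAI_col A k v w" using cp k v True by blast
      then show ?thesis using True unfolding mcol_def by simp
    next
      case False then show ?thesis using su uU unfolding mcol_def by simp
    qed
  qed
  have mo: "model U \<Omega> V A u col"
    by (rule model.intro) (use fV sy inj Ue Oe colu in \<open>auto simp: symm_def\<close>)
  have t: "tight U \<Omega> \<I>" unfolding Ie Me using model.model_tight[OF mo] .
  have "strict_sheltering U M \<Omega>" unfolding strict_sheltering_def using sh model.model_strict[OF mo] Me by simp
  moreover have "binary_matroid U M" using model.model_binary[OF mo] Me by simp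
  ultimately have "strictly_binary_mm U \<Omega> \<I>" unfolding strictly_binary_mm_def using Ie by blast
  then show ?thesis using t by blast
qed

lemma one_imp_three:
  assumes q: "q_matroid 3 U \<Omega> \<I>" and t: "tight U \<Omega> \<I>" and b: "binary_mm U \<Omega> \<I>"
  shows "IAAI_sheltered U \<Omega> \<I>"
proof -
  obtain M where M: "binary_matroid U M" "\<I> = sheltered_indep U M \<Omega>"
    using b unfolding binary_mm_def by blast
  obtain n col0 where c: "M = column_matroid U (col0 :: _ \<Rightarrow> nat \<Rightarrow> bit)"
    using M(1) unfolding binary_matroid_def by blast
  have "cons U \<Omega> \<I> col0" by (rule cons.intro) (use q t M(2) c in auto)
  then show ?thesis by (rule cons.IAAI)
qed

theorem theorem2p10:
  assumes "q_matroid 3 U \<Omega> \<I>"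
  shows "((tight U \<Omega> \<I> \<and> binary_mm U \<Omega> \<I>) \<longleftrightarrow> (tight U \<Omega> \<I> \<and> strictly_binary_mm U \<Omega> \<I>))
       \<and> ((tight U \<Omega> \<I> \<and> binary_mm U \<Omega> \<I>) \<longleftrightarrow> IAAI_sheltered U \<Omega> \<I>)"
proof -
  have a: "tight U \<Omega> \<I> \<and> binary_mm U \<Omega> \<I> \<Longrightarrow> IAAI_sheltered U \<Omega> \<I>"
    using one_imp_three[OF assms] by blast
  have b: "IAAI_sheltered U \<Omega> \<I> \<Longrightarrow> tight U \<Omega> \<I> \<and> strictly_binary_mm U \<Omega> \<I>"
    by (rule IAAI_imp)
  have c: "tight U \<Omega> \<I> \<and> strictly_binary_mm U \<Omega> \<I> \<Longrightarrow> tight U \<Omega> \<I> \<and> binary_mm U \<Omega> \<I>"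
    using strict_imp_binary by blast
  show ?thesis using a b c by blast
qed


end
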